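(* The order-preserving map $\psi:T_K(V)\to T_{O_K}(\Lambda)$, $W\mapsto W\cap\Lambda$, induces a homotopy equivalence of the order complexes (geometric realizations) $T_K(V)^\bullet\simeq T_{O_K}(\Lambda)^\bullet$.
   Context: $K$ finite over $\mathbb Q_p$, $O_K$ its integers, $\pi$ a uniformizer, $V=K^{d+1}$, $\Lambda=\bigoplus_{i=0}^dO_Ke_i$. $T_K(V)$ is the poset (under inclusion) of $K$-subspaces $0\neq W\subsetneq V$ (the Tits building of $\mathrm{GL}(V)$). $T_{O_K}(\Lambda)$ is the poset (under inclusion) of $O_K$-submodules $U\subset\Lambda$ with $U\not\subset\pi\Lambda$ (i.e. $\dim_{O_K/\pi}(U+\pi\Lambda)/\pi\Lambda\ge1$) which can be generated by at most $d$ elements. For a poset $X$, the order complex $X^\bullet$ has as $n$-simplices chains $x_0\prec\cdots\prec x_n$. *)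

theory Defs
  imports "HOL-Analysis.Analysis"
begin

text \<open>A normalized discrete valuation on a field (the value at 0 is irrelevant).\<close>
definition normalized_discrete_valuation :: "('k::field \<Rightarrow> int) \<Rightarrow> bool" where
  "normalized_discrete_valuation v \<longleftrightarrow>
     (\<forall>x y. x \<noteq> 0 \<longrightarrow> y \<noteq> 0 \<longrightarrow> v (x * y) = v x + v y) \<and>
     (\<forall>x y. x \<noteq> 0 \<longrightarrow> y \<noteq> 0 \<longrightarrow> x + y \<noteq> 0 \<longrightarrow> min (v x) (v y) \<le> v (x + y)) \<and>
     (\<forall>n. \<exists>x. x \<noteq> 0 \<and> v x = n)"

text \<open>x lies in pi^n OK (i.e. has valuation at least n).\<close>
definition val_ge :: "('k::field \<Rightarrow> int) \<Rightarrow> int \<Rightarrow> 'k \<Rightarrow> bool" where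
  "val_ge v n x \<longleftrightarrow> x = 0 \<or> n \<le> v x"

definition valuation_ring :: "('k::field \<Rightarrow> int) \<Rightarrow> 'k set" where
  "valuation_ring v = {x. val_ge v 0 x}"

text \<open>K is complete, discretely valued, with finite residue field; together with
  characteristic 0 this characterises the finite extensions of Q_p.\<close>
definition p_adic_local_field :: "('k::field_char_0 \<Rightarrow> int) \<Rightarrow> bool" where
  "p_adic_local_field v \<longleftrightarrow>
     normalized_discrete_valuation v \<and>
     (\<exists>R. finite R \<and> R \<subseteq> valuation_ring v \<and>
          (\<forall>x\<in>valuation_ring v. \<exists>r\<in>R. val_ge v 1 (x - r))) \<and>
     (\<forall>s::nat \<Rightarrow> 'k. (\<forall>N. \<exists>M. \<forall>m\<ge>M. \<forall>n\<ge>M. val_ge v N (s m - s n)) \<longrightarrow>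
          (\<exists>L. \<forall>N. \<exists>M. \<forall>n\<ge>M. val_ge v N (s n - L)))"

text \<open>V = K^(d+1) is modelled as 'n \<Rightarrow> 'k with CARD('n) = d + 1.\<close>

definition vscale :: "'k::field \<Rightarrow> ('n \<Rightarrow> 'k) \<Rightarrow> ('n \<Rightarrow> 'k)" where
  "vscale c x = (\<lambda>i. c * x i)"

definition vadd :: "('n \<Rightarrow> 'k::field) \<Rightarrow> ('n \<Rightarrow> 'k) \<Rightarrow> ('n \<Rightarrow> 'k)" where
  "vadd x y = (\<lambda>i. x i + y i)"

definition vzero :: "'n \<Rightarrow> 'k::field" where
  "vzero = (\<lambda>i. 0)"

definition is_K_subspace :: "('n \<Rightarrow> 'k::field) set \<Rightarrow> bool" where
  "is_K_subspace W \<longleftrightarrow> vzero \<in> W \<and> (\<forall>x\<in>W. \<forall>y\<in>W. vadd x y \<in> W) \<and>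
      (\<forall>c. \<forall>x\<in>W. vscale c x \<in> W)"

definition tits_building :: "('n::finite \<Rightarrow> 'k::field) set set" where
  "tits_building = {W. is_K_subspace W \<and> W \<noteq> {vzero} \<and> W \<noteq> UNIV}"

definition std_lattice :: "'k::field set \<Rightarrow> ('n \<Rightarrow> 'k) set" where
  "std_lattice OK = {x. \<forall>i. x i \<in> OK}"

definition is_O_submodule :: "'k::field set \<Rightarrow> ('n \<Rightarrow> 'k) set \<Rightarrow> bool" where
  "is_O_submodule OK U \<longleftrightarrow> vzero \<in> U \<and> (\<forall>x\<in>U. \<forall>y\<in>U. vadd x y \<in> U) \<and>
      (\<forall>c\<in>OK. \<forall>x\<in>U. vscale c x \<in> U)"

definition O_span :: "'k::field set \<Rightarrow> ('n \<Rightarrow> 'k) list \<Rightarrow> ('n \<Rightarrow> 'k) set" where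
  "O_span OK gs = {(\<lambda>i. \<Sum>j<length gs. c j * (gs ! j) i) | c. \<forall>j<length gs. c j \<in> OK}"

definition lattice_poset :: "'k::field set \<Rightarrow> 'k \<Rightarrow> ('n::finite \<Rightarrow> 'k) set set" where
  "lattice_poset OK \<pi> = {U. is_O_submodule OK U \<and> U \<subseteq> std_lattice OK \<and>
       \<not> U \<subseteq> (vscale \<pi>) ` std_lattice OK \<and>
       (\<exists>gs. length gs \<le> CARD('n) - 1 \<and> U = O_span OK gs)}"

definition osupp :: "('a \<Rightarrow> real) \<Rightarrow> 'a set" where
  "osupp f = {x. f x \<noteq> 0}"

definition is_chain_in :: "('a \<Rightarrow> 'a \<Rightarrow> bool) \<Rightarrow> 'a set \<Rightarrow> bool" where
  "is_chain_in le S \<longleftrightarrow> (\<forall>x\<in>S. \<forall>y\<in>S. le x y \<or> le y x)"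

definition realization_carrier :: "'a set \<Rightarrow> ('a \<Rightarrow> 'a \<Rightarrow> bool) \<Rightarrow> ('a \<Rightarrow> real) set" where
  "realization_carrier P le = {f. finite (osupp f) \<and> osupp f \<subseteq> P \<and> is_chain_in le (osupp f) \<and>
       (\<forall>x. 0 \<le> f x) \<and> sum f (osupp f) = 1}"

definition closed_simplex :: "'a set \<Rightarrow> ('a \<Rightarrow> 'a \<Rightarrow> bool) \<Rightarrow> 'a set \<Rightarrow> ('a \<Rightarrow> real) set" where
  "closed_simplex P le \<sigma> = {f \<in> realization_carrier P le. osupp f \<subseteq> \<sigma>}"

text \<open>The weak (coherent) topology: U is open iff its trace on each closed simplex
  (a finite chain, with its Euclidean topology) is open.\<close>
definition order_complex :: "'a set \<Rightarrow> ('a \<Rightarrow> 'a \<Rightarrow> bool) \<Rightarrow> ('a \<Rightarrow> real) topology" where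
  "order_complex P le = topology (\<lambda>U. U \<subseteq> realization_carrier P le \<and>
      (\<forall>\<sigma>. finite \<sigma> \<and> \<sigma> \<subseteq> P \<and> is_chain_in le \<sigma> \<longrightarrow>
          openin (top_of_set (closed_simplex P le \<sigma>)) (U \<inter> closed_simplex P le \<sigma>)))"

definition realization_map :: "('a \<Rightarrow> 'b) \<Rightarrow> ('a \<Rightarrow> real) \<Rightarrow> ('b \<Rightarrow> real)" where
  "realization_map \<psi> f = (\<lambda>y. \<Sum>x\<in>{x\<in>osupp f. \<psi> x = y}. f x)"

end

theory Submission
  imports Defs
begin


lemma oc_istopology:
  "istopology (\<lambda>U. U \<subseteq> realization_carrier P le \<and>
      (\<forall>\<sigma>. finite \<sigma> \<and> \<sigma> \<subseteq> P \<and> is_chain_in le \<sigma> \<longrightarrow>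
          openin (top_of_set (closed_simplex P le \<sigma>)) (U \<inter> closed_simplex P le \<sigma>)))"
  unfolding istopology_def
proof (intro conjI allI impI ballI)
  fix S T :: "('a \<Rightarrow> real) set"
  assume S: "S \<subseteq> realization_carrier P le \<and> (\<forall>\<sigma>. finite \<sigma> \<and> \<sigma> \<subseteq> P \<and> is_chain_in le \<sigma> \<longrightarrow>
          openin (top_of_set (closed_simplex P le \<sigma>)) (S \<inter> closed_simplex P le \<sigma>))"
    and T: "T \<subseteq> realization_carrier P le \<and> (\<forall>\<sigma>. finite \<sigma> \<and> \<sigma> \<subseteq> P \<and> is_chain_in le \<sigma> \<longrightarrow>
          openin (top_of_set (closed_simplex P le \<sigma>)) (T \<inter> closed_simplex P le \<sigma>))"
  show "S \<inter> T \<subseteq> realization_carrier P le" using S by auto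
  fix \<sigma> assume s: "finite \<sigma> \<and> \<sigma> \<subseteq> P \<and> is_chain_in le \<sigma>"
  have o1: "openin (top_of_set (closed_simplex P le \<sigma>)) (S \<inter> closed_simplex P le \<sigma>)"
    using S s by blast
  have o2: "openin (top_of_set (closed_simplex P le \<sigma>)) (T \<inter> closed_simplex P le \<sigma>)"
    using T s by blast
  have "openin (top_of_set (closed_simplex P le \<sigma>)) ((S \<inter> closed_simplex P le \<sigma>) \<inter> (T \<inter> closed_simplex P le \<sigma>))"
    using o1 o2 by (rule openin_Int)
  then show "openin (top_of_set (closed_simplex P le \<sigma>)) (S \<inter> T \<inter> closed_simplex P le \<sigma>)"
    by (simp add: Int_ac)
next
  fix K :: "('a \<Rightarrow> real) set set"
  assume K: "\<forall>S\<in>K. S \<subseteq> realization_carrier P le \<and> (\<forall>\<sigma>. finite \<sigma> \<and> \<sigma> \<subseteq> P \<and> is_chain_in le \<sigma> \<longrightarrow>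
          openin (top_of_set (closed_simplex P le \<sigma>)) (S \<inter> closed_simplex P le \<sigma>))"
  show "\<Union>K \<subseteq> realization_carrier P le" using K by auto
  fix \<sigma> assume s: "finite \<sigma> \<and> \<sigma> \<subseteq> P \<and> is_chain_in le \<sigma>"
  have H: "openin (top_of_set (closed_simplex P le \<sigma>)) (\<Union>S\<in>K. S \<inter> closed_simplex P le \<sigma>)"
  proof (rule openin_Union)
    fix S' assume "S' \<in> (\<lambda>S. S \<inter> closed_simplex P le \<sigma>) ` K"
    then obtain S where S: "S \<in> K" "S' = S \<inter> closed_simplex P le \<sigma>" by blast
    have KS: "S \<subseteq> realization_carrier P le \<and> (\<forall>\<sigma>. finite \<sigma> \<and> \<sigma> \<subseteq> P \<and> is_chain_in le \<sigma> \<longrightarrow>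
          openin (top_of_set (closed_simplex P le \<sigma>)) (S \<inter> closed_simplex P le \<sigma>))"
      using K S(1) by (rule bspec)
    have i: "finite \<sigma> \<and> \<sigma> \<subseteq> P \<and> is_chain_in le \<sigma> \<longrightarrow>
          openin (top_of_set (closed_simplex P le \<sigma>)) (S \<inter> closed_simplex P le \<sigma>)"
      using conjunct2[OF KS] by (rule spec)
    have "openin (top_of_set (closed_simplex P le \<sigma>)) (S \<inter> closed_simplex P le \<sigma>)"
      using i s by (rule mp)
    then show "openin (top_of_set (closed_simplex P le \<sigma>)) S'"
      unfolding S(2) .
  qed
  have eq: "\<Union>K \<inter> closed_simplex P le \<sigma> = (\<Union>S\<in>K. S \<inter> closed_simplex P le \<sigma>)" by (rule Int_Union2)
  show "openin (top_of_set (closed_simplex P le \<sigma>)) (\<Union>K \<inter> closed_simplex P le \<sigma>)"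
    unfolding eq by (rule H)
qed

lemma openin_oc:
  "openin (order_complex P le) U \<longleftrightarrow> U \<subseteq> realization_carrier P le \<and>
      (\<forall>\<sigma>. finite \<sigma> \<and> \<sigma> \<subseteq> P \<and> is_chain_in le \<sigma> \<longrightarrow>
          openin (top_of_set (closed_simplex P le \<sigma>)) (U \<inter> closed_simplex P le \<sigma>))"
  unfolding order_complex_def topology_inverse'[OF oc_istopology] by (rule refl)

lemma cs_sub: "closed_simplex P le \<sigma> \<subseteq> realization_carrier P le"
  by (auto simp: closed_simplex_def)

lemma topspace_oc: "topspace (order_complex P le) = realization_carrier P le"
proof -
  have "openin (order_complex P le) (realization_carrier P le)"
    unfolding openin_oc by (simp add: Int_absorb1[OF cs_sub])
  then have 1: "realization_carrier P le \<subseteq> topspace (order_complex P le)"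
    by (rule openin_subset)
  have "topspace (order_complex P le) \<subseteq> realization_carrier P le"
    using openin_topspace[of "order_complex P le"] unfolding openin_oc by blast
  with 1 show ?thesis by blast
qed


definition subcar :: "'a set \<Rightarrow> ('a \<Rightarrow> 'a \<Rightarrow> bool) \<Rightarrow> 'a set \<Rightarrow> ('a \<Rightarrow> real) set" where
  "subcar P le C = {f \<in> realization_carrier P le. osupp f \<subseteq> C}"

lemma closed_vanish: "closed {f :: 'a \<Rightarrow> real. \<forall>y\<in>D. f y = 0}"
proof -
  have eq: "{f :: 'a \<Rightarrow> real. \<forall>y\<in>D. f y = 0} = (\<Inter>y\<in>D. {f. f y = 0})" by blast
  have "\<forall>y\<in>D. closed {f :: 'a \<Rightarrow> real. f y = 0}"
  proof
    fix y
    have "continuous_on UNIV (\<lambda>f :: 'a \<Rightarrow> real. f y)" by simp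
    then show "closed {f :: 'a \<Rightarrow> real. f y = 0}"
      by (intro closed_Collect_eq) (auto intro: continuous_on_const)
  qed
  then show ?thesis unfolding eq by (rule closed_INT)
qed

lemma cs_eq_subcar_vanish:
  assumes "\<sigma> \<subseteq> C"
  shows "closed_simplex P le \<sigma> = subcar P le C \<inter> {f. \<forall>y\<in>C - \<sigma>. f y = 0}"
proof
  show "closed_simplex P le \<sigma> \<subseteq> subcar P le C \<inter> {f. \<forall>y\<in>C - \<sigma>. f y = 0}"
  proof
    fix f assume f: "f \<in> closed_simplex P le \<sigma>"
    then have "f \<in> realization_carrier P le" "osupp f \<subseteq> \<sigma>" by (auto simp: closed_simplex_def)
    then show "f \<in> subcar P le C \<inter> {f. \<forall>y\<in>C - \<sigma>. f y = 0}"
      using assms unfolding subcar_def osupp_def by blast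
  qed
next
  show "subcar P le C \<inter> {f. \<forall>y\<in>C - \<sigma>. f y = 0} \<subseteq> closed_simplex P le \<sigma>"
  proof
    fix f assume f: "f \<in> subcar P le C \<inter> {f. \<forall>y\<in>C - \<sigma>. f y = 0}"
    then have "f \<in> realization_carrier P le" "osupp f \<subseteq> C" "\<forall>y\<in>C - \<sigma>. f y = 0"
      by (auto simp: subcar_def)
    then have "osupp f \<subseteq> \<sigma>" unfolding osupp_def by blast
    then show "f \<in> closed_simplex P le \<sigma>" using \<open>f \<in> realization_carrier P le\<close>
      by (simp add: closed_simplex_def)
  qed
qed

lemma subcar_Union:
  "subcar P le C = (\<Union>\<sigma>\<in>{\<sigma>. \<sigma> \<subseteq> C \<and> \<sigma> \<subseteq> P \<and> is_chain_in le \<sigma>}. closed_simplex P le \<sigma>)"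
proof
  show "subcar P le C \<subseteq> (\<Union>\<sigma>\<in>{\<sigma>. \<sigma> \<subseteq> C \<and> \<sigma> \<subseteq> P \<and> is_chain_in le \<sigma>}. closed_simplex P le \<sigma>)"
  proof
    fix f assume f: "f \<in> subcar P le C"
    then have r: "f \<in> realization_carrier P le" and s: "osupp f \<subseteq> C" by (auto simp: subcar_def)
    then have "osupp f \<subseteq> P" "is_chain_in le (osupp f)" by (auto simp: realization_carrier_def)
    moreover have "f \<in> closed_simplex P le (osupp f)" using r by (simp add: closed_simplex_def)
    ultimately show "f \<in> (\<Union>\<sigma>\<in>{\<sigma>. \<sigma> \<subseteq> C \<and> \<sigma> \<subseteq> P \<and> is_chain_in le \<sigma>}. closed_simplex P le \<sigma>)"
      using s by blast
  qed
next
  show "(\<Union>\<sigma>\<in>{\<sigma>. \<sigma> \<subseteq> C \<and> \<sigma> \<subseteq> P \<and> is_chain_in le \<sigma>}. closed_simplex P le \<sigma>) \<subseteq> subcar P le C"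
    by (auto simp: subcar_def closed_simplex_def)
qed

lemma open_subcar:
  assumes C: "finite C" and Op: "openin (order_complex P le) Op"
  shows "openin (top_of_set (subcar P le C)) (Op \<inter> subcar P le C)"
proof -
  let ?S = "subcar P le C"
  let ?Sig = "{\<sigma>. \<sigma> \<subseteq> C \<and> \<sigma> \<subseteq> P \<and> is_chain_in le \<sigma>}"
  have fin: "finite ?Sig" using C by (rule rev_finite_subset[OF finite_Pow_iff[THEN iffD2]]) auto
  have eq: "?S - Op = (\<Union>\<sigma>\<in>?Sig. closed_simplex P le \<sigma> - Op)"
    using subcar_Union[of P le C] by blast
  have cl: "closedin (top_of_set ?S) (closed_simplex P le \<sigma> - Op)" if "\<sigma> \<in> ?Sig" for \<sigma>
  proof -
    have s: "\<sigma> \<subseteq> C" "\<sigma> \<subseteq> P" "is_chain_in le \<sigma>" "finite \<sigma>" using that C finite_subset by auto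
    have o: "openin (top_of_set (closed_simplex P le \<sigma>)) (Op \<inter> closed_simplex P le \<sigma>)"
      using Op s unfolding openin_oc by blast
    have c1: "closedin (top_of_set (closed_simplex P le \<sigma>)) (closed_simplex P le \<sigma> - (Op \<inter> closed_simplex P le \<sigma>))"
      using closedin_diff[OF closedin_topspace o] by simp
    have c2: "closedin (top_of_set ?S) (closed_simplex P le \<sigma>)"
      unfolding cs_eq_subcar_vanish[OF s(1)]
      by (rule closedin_closed_Int[OF closed_vanish])
    have sub: "closed_simplex P le \<sigma> \<subseteq> ?S"
      using subcar_Union[of P le C] that by blast
    have "subtopology (top_of_set ?S) (closed_simplex P le \<sigma>) = top_of_set (closed_simplex P le \<sigma>)"
      using sub by (simp add: subtopology_subtopology Int_absorb1 inf.absorb2)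
    moreover have "closed_simplex P le \<sigma> - (Op \<inter> closed_simplex P le \<sigma>) = closed_simplex P le \<sigma> - Op" by blast
    ultimately have "closedin (subtopology (top_of_set ?S) (closed_simplex P le \<sigma>)) (closed_simplex P le \<sigma> - Op)"
      using c1 by metis
    then show ?thesis using c2 by (rule closedin_trans_full)
  qed
  have "closedin (top_of_set ?S) (?S - Op)"
    unfolding eq by (rule closedin_Union) (use fin cl in auto)
  then have "openin (top_of_set ?S) (?S - (?S - Op))"
    using openin_diff[OF openin_topspace] by (metis topspace_euclidean_subtopology)
  moreover have "?S - (?S - Op) = Op \<inter> ?S" by blast
  ultimately show ?thesis by simp
qed

lemma cont_from_oc:
  assumes "\<And>x. x \<in> realization_carrier P le \<Longrightarrow> h x \<in> topspace Z"
    and "\<And>\<sigma>. finite \<sigma> \<Longrightarrow> \<sigma> \<subseteq> P \<Longrightarrow> is_chain_in le \<sigma> \<Longrightarrow>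
           continuous_map (top_of_set (closed_simplex P le \<sigma>)) Z h"
  shows "continuous_map (order_complex P le) Z h"
  unfolding continuous_map_def topspace_oc
proof (intro conjI allI impI Pi_I)
  fix x assume "x \<in> realization_carrier P le" then show "h x \<in> topspace Z" by (rule assms(1))
next
  fix U assume U: "openin Z U"
  show "openin (order_complex P le) {x \<in> realization_carrier P le. h x \<in> U}"
    unfolding openin_oc
  proof (intro conjI allI impI)
    fix \<sigma> assume s: "finite \<sigma> \<and> \<sigma> \<subseteq> P \<and> is_chain_in le \<sigma>"
    have "openin (top_of_set (closed_simplex P le \<sigma>)) {x \<in> topspace (top_of_set (closed_simplex P le \<sigma>)). h x \<in> U}"
      using openin_continuous_map_preimage[OF assms(2) U] s by blast
    moreover have "{x \<in> topspace (top_of_set (closed_simplex P le \<sigma>)). h x \<in> U}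
        = {x \<in> realization_carrier P le. h x \<in> U} \<inter> closed_simplex P le \<sigma>"
      using cs_sub[of P le \<sigma>] by auto
    ultimately show "openin (top_of_set (closed_simplex P le \<sigma>)) ({x \<in> realization_carrier P le. h x \<in> U} \<inter> closed_simplex P le \<sigma>)"
      by simp
  qed auto
qed

lemma cont_to_oc:
  assumes C: "finite C" and h: "continuous_on A h" and im: "h ` A \<subseteq> subcar Q le C"
  shows "continuous_map (top_of_set A) (order_complex Q le) h"
  unfolding continuous_map_def topspace_oc topspace_euclidean_subtopology
proof (intro conjI allI impI Pi_I)
  fix x assume "x \<in> A" then show "h x \<in> realization_carrier Q le" using im by (auto simp: subcar_def)
next
  fix U assume U: "openin (order_complex Q le) U"
  obtain T where T: "open T" "U \<inter> subcar Q le C = subcar Q le C \<inter> T"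
    using open_subcar[OF C U] unfolding openin_open by blast
  have "{x \<in> A. h x \<in> U} = A \<inter> h -` T" using im T(2) by blast
  then show "openin (top_of_set A) {x \<in> A. h x \<in> U}"
    using continuous_openin_preimage_gen[OF h T(1)] by simp
qed


lemma cont_from_prod_oc:
  fixes H :: "real \<times> ('a \<Rightarrow> real) \<Rightarrow> 'b"
  assumes im: "\<And>t x. t \<in> {0..1} \<Longrightarrow> x \<in> realization_carrier P le \<Longrightarrow> H (t,x) \<in> topspace Z"
    and cs: "\<And>\<sigma>. finite \<sigma> \<Longrightarrow> \<sigma> \<subseteq> P \<Longrightarrow> is_chain_in le \<sigma> \<Longrightarrow>
           continuous_map (top_of_set ({0..1::real} \<times> closed_simplex P le \<sigma>)) Z H"
  shows "continuous_map (prod_topology (top_of_set {0..1::real}) (order_complex P le)) Z H"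
  unfolding continuous_map_def topspace_prod_topology topspace_oc topspace_euclidean_subtopology
proof (intro conjI allI impI Pi_I)
  fix z assume "z \<in> {0..1::real} \<times> realization_carrier P le"
  then show "H z \<in> topspace Z" using im by (cases z) auto
next
  fix U assume U: "openin Z U"
  let ?I = "{0..1::real}"
  define A where "A = {z \<in> ?I \<times> realization_carrier P le. H z \<in> U}"
  have Asig: "openin (top_of_set (?I \<times> closed_simplex P le \<sigma>)) (A \<inter> (?I \<times> closed_simplex P le \<sigma>))"
    if s: "finite \<sigma>" "\<sigma> \<subseteq> P" "is_chain_in le \<sigma>" for \<sigma>
  proof -
    have "openin (top_of_set (?I \<times> closed_simplex P le \<sigma>)) {z \<in> topspace (top_of_set (?I \<times> closed_simplex P le \<sigma>)). H z \<in> U}"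
      using openin_continuous_map_preimage[OF cs[OF s] U] .
    moreover have "{z \<in> topspace (top_of_set (?I \<times> closed_simplex P le \<sigma>)). H z \<in> U} = A \<inter> (?I \<times> closed_simplex P le \<sigma>)"
      unfolding A_def using cs_sub[of P le \<sigma>] by auto
    ultimately show ?thesis by simp
  qed
  have "openin (prod_topology (top_of_set ?I) (order_complex P le)) A"
    unfolding openin_subopen[of _ A]
  proof
    fix z assume zA: "z \<in> A"
    obtain t0 x0 where z: "z = (t0, x0)" by (cases z)
    have t0: "t0 \<in> ?I" and x0: "x0 \<in> realization_carrier P le" using zA z by (auto simp: A_def)
    let ?s0 = "osupp x0"
    have s0: "finite ?s0" "?s0 \<subseteq> P" "is_chain_in le ?s0" using x0 by (auto simp: realization_carrier_def)
    have x0cs: "x0 \<in> closed_simplex P le ?s0" using x0 by (simp add: closed_simplex_def)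
    obtain T where T: "open T" "A \<inter> (?I \<times> closed_simplex P le ?s0) = (?I \<times> closed_simplex P le ?s0) \<inter> T"
      using Asig[OF s0] unfolding openin_open by blast
    have "(t0, x0) \<in> T" using T(2) zA z t0 x0cs by blast
    then obtain A1 B1 where AB: "open A1" "open B1" "(t0,x0) \<in> A1 \<times> B1" "A1 \<times> B1 \<subseteq> T"
      using open_prod_elim[OF T(1)] by metis
    obtain e where e: "e > 0" "ball t0 e \<subseteq> A1" using AB(1,3) openE by blast
    define N where "N = cball t0 (e/2) \<inter> ?I"
    have Ncomp: "compact N" unfolding N_def by (intro compact_Int_closed) auto
    have NI: "N \<subseteq> ?I" by (auto simp: N_def)
    have NA: "(t, x0) \<in> A" if "t \<in> N" for t
    proof -
      have "t \<in> ball t0 e" using that e(1) by (auto simp: N_def dist_commute)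
      then have "(t, x0) \<in> T" using AB e by blast
      moreover have "(t, x0) \<in> ?I \<times> closed_simplex P le ?s0" using that NI x0cs by blast
      ultimately show ?thesis using T(2) by blast
    qed
    define U' where "U' = {x \<in> realization_carrier P le. \<forall>t\<in>N. (t,x) \<in> A}"
    have x0U': "x0 \<in> U'" using x0 NA by (simp add: U'_def)
    have U'open: "openin (order_complex P le) U'"
      unfolding openin_oc
    proof (intro conjI allI impI)
      show "U' \<subseteq> realization_carrier P le" by (auto simp: U'_def)
      fix \<sigma> assume s: "finite \<sigma> \<and> \<sigma> \<subseteq> P \<and> is_chain_in le \<sigma>"
      show "openin (top_of_set (closed_simplex P le \<sigma>)) (U' \<inter> closed_simplex P le \<sigma>)"
        unfolding openin_subopen[of _ "U' \<inter> closed_simplex P le \<sigma>"]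
      proof
        fix x1 assume x1: "x1 \<in> U' \<inter> closed_simplex P le \<sigma>"
        have W: "openin (prod_topology (top_of_set ?I) (top_of_set (closed_simplex P le \<sigma>)))
                   (A \<inter> (?I \<times> closed_simplex P le \<sigma>))"
          using Asig[of \<sigma>] s by simp
        have C: "compactin (top_of_set ?I) N"
          using Ncomp NI by (simp add: compactin_subtopology)
        have y: "x1 \<in> topspace (top_of_set (closed_simplex P le \<sigma>))" using x1 by simp
        have sub: "N \<times> {x1} \<subseteq> A \<inter> (?I \<times> closed_simplex P le \<sigma>)"
          using x1 NI by (auto simp: U'_def)
        obtain U1 V1 where UV: "openin (top_of_set ?I) U1" "openin (top_of_set (closed_simplex P le \<sigma>)) V1"
           "N \<subseteq> U1" "x1 \<in> V1" "U1 \<times> V1 \<subseteq> A \<inter> (?I \<times> closed_simplex P le \<sigma>)"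
          using tube_lemma_left[OF W C y sub] by blast
        have "V1 \<subseteq> U' \<inter> closed_simplex P le \<sigma>"
        proof
          fix x assume xV: "x \<in> V1"
          have xc: "x \<in> closed_simplex P le \<sigma>" using openin_subset[OF UV(2)] xV by auto
          then have "x \<in> realization_carrier P le" using cs_sub by blast
          moreover have "\<forall>t\<in>N. (t,x) \<in> A" using UV(3,5) xV by blast
          ultimately show "x \<in> U' \<inter> closed_simplex P le \<sigma>" using xc by (simp add: U'_def)
        qed
        then show "\<exists>T. openin (top_of_set (closed_simplex P le \<sigma>)) T \<and> x1 \<in> T \<and> T \<subseteq> U' \<inter> closed_simplex P le \<sigma>"
          using UV(2,4) by blast
      qed
    qed
    define T0 where "T0 = (?I \<inter> ball t0 (e/2)) \<times> U'"
    have "openin (top_of_set ?I) (?I \<inter> ball t0 (e/2))" by (intro openin_open_Int) simp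
    then have "openin (prod_topology (top_of_set ?I) (order_complex P le)) T0"
      unfolding T0_def openin_prod_Times_iff using U'open by blast
    moreover have "z \<in> T0" using z t0 e(1) x0U' by (simp add: T0_def)
    moreover have "T0 \<subseteq> A"
    proof
      fix w assume "w \<in> T0"
      then obtain t x where w: "w = (t,x)" "t \<in> ?I \<inter> ball t0 (e/2)" "x \<in> U'" by (auto simp: T0_def)
      then have "t \<in> N" by (auto simp: N_def)
      then show "w \<in> A" using w by (auto simp: U'_def)
    qed
    ultimately show "\<exists>T. openin (prod_topology (top_of_set ?I) (order_complex P le)) T \<and> z \<in> T \<and> T \<subseteq> A"
      by blast
  qed
  then show "openin (prod_topology (top_of_set ?I) (order_complex P le))
          {x \<in> ?I \<times> realization_carrier P le. H x \<in> U}" by (simp add: A_def)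
qed


lemma rm_apply: "realization_map f x y = (\<Sum>a\<in>{a \<in> osupp x. f a = y}. x a)"
  by (simp add: realization_map_def)

lemma rc_facts:
  assumes "x \<in> realization_carrier P le"
  shows "finite (osupp x)" "osupp x \<subseteq> P" "is_chain_in le (osupp x)" "\<And>a. 0 \<le> x a"
    "sum x (osupp x) = 1"
  using assms by (auto simp: realization_carrier_def)

lemma osupp_rm: "osupp (realization_map f x) \<subseteq> f ` osupp x"
proof
  fix y assume y: "y \<in> osupp (realization_map f x)"
  show "y \<in> f ` osupp x"
  proof (rule ccontr)
    assume "y \<notin> f ` osupp x"
    then have e: "{a \<in> osupp x. f a = y} = {}" by blast
    have "realization_map f x y = 0" unfolding rm_apply e by simp
    then show False using y by (simp add: osupp_def)
  qed
qed

lemma chain_image: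
  assumes "is_chain_in le S" "S \<subseteq> P" "\<And>a b. a \<in> P \<Longrightarrow> b \<in> P \<Longrightarrow> le a b \<Longrightarrow> le' (f a) (f b)"
  shows "is_chain_in le' (f ` S)"
  using assms unfolding is_chain_in_def by blast

lemma chain_subset: "is_chain_in le S \<Longrightarrow> T \<subseteq> S \<Longrightarrow> is_chain_in le T"
  unfolding is_chain_in_def by blast

lemma sum_osupp_eq:
  assumes "finite T" "osupp g \<subseteq> T"
  shows "sum g (osupp g) = sum g T"
  by (rule sum.mono_neutral_left) (use assms in \<open>auto simp: osupp_def\<close>)

lemma rm_carrier:
  assumes x: "x \<in> realization_carrier P le"
    and fP: "\<And>a. a \<in> P \<Longrightarrow> f a \<in> Q"
    and mono: "\<And>a b. a \<in> P \<Longrightarrow> b \<in> P \<Longrightarrow> le a b \<Longrightarrow> le' (f a) (f b)"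
  shows "realization_map f x \<in> realization_carrier Q le'"
proof -
  note xf = rc_facts[OF x]
  have sub: "osupp (realization_map f x) \<subseteq> f ` osupp x" by (rule osupp_rm)
  have fin: "finite (f ` osupp x)" using xf(1) by simp
  have "sum (realization_map f x) (osupp (realization_map f x)) = sum (realization_map f x) (f ` osupp x)"
    by (rule sum_osupp_eq[OF fin sub])
  also have "\<dots> = (\<Sum>y\<in>f ` osupp x. \<Sum>a\<in>{a \<in> osupp x. f a = y}. x a)" by (simp add: rm_apply)
  also have "\<dots> = sum x (osupp x)" by (rule sum.group) (use xf(1) in auto)
  also have "\<dots> = 1" by (rule xf(5))
  finally have s1: "sum (realization_map f x) (osupp (realization_map f x)) = 1" .
  have ch: "is_chain_in le' (f ` osupp x)" by (rule chain_image[of le "osupp x" P le' f, OF xf(3) xf(2) mono])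
  show ?thesis unfolding realization_carrier_def
  proof (intro CollectI conjI allI)
    show "finite (osupp (realization_map f x))" using finite_subset[OF sub fin] .
    show "osupp (realization_map f x) \<subseteq> Q" using sub xf(2) fP by blast
    show "is_chain_in le' (osupp (realization_map f x))" by (rule chain_subset[OF ch sub])
    fix y show "0 \<le> realization_map f x y" unfolding rm_apply by (rule sum_nonneg) (use xf(4) in auto)
  qed (rule s1)
qed

lemma rm_on_cs:
  assumes x: "x \<in> closed_simplex P le \<sigma>" and fin: "finite \<sigma>"
  shows "realization_map f x = (\<lambda>y. \<Sum>a\<in>{a \<in> \<sigma>. f a = y}. x a)"
proof
  fix y
  have s: "osupp x \<subseteq> \<sigma>" using x by (simp add: closed_simplex_def)
  show "realization_map f x y = (\<Sum>a\<in>{a \<in> \<sigma>. f a = y}. x a)"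
    unfolding rm_apply
    by (rule sum.mono_neutral_left) (use s fin in \<open>auto simp: osupp_def\<close>)
qed

lemma cont_coord [continuous_intros]: "continuous_on S (\<lambda>x :: 'a \<Rightarrow> real. x a)"
  by (rule continuous_on_subset[OF continuous_on_product_coordinates]) simp

lemma rm_continuous:
  assumes fP: "\<And>a. a \<in> P \<Longrightarrow> f a \<in> Q"
    and mono: "\<And>a b. a \<in> P \<Longrightarrow> b \<in> P \<Longrightarrow> le a b \<Longrightarrow> le' (f a) (f b)"
  shows "continuous_map (order_complex P le) (order_complex Q le') (realization_map f)"
proof (rule cont_from_oc)
  fix x assume "x \<in> realization_carrier P le"
  then show "realization_map f x \<in> topspace (order_complex Q le')"
    unfolding topspace_oc by (rule rm_carrier[of x P le f Q le', OF _ fP mono])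
next
  fix \<sigma> assume s: "finite \<sigma>" "\<sigma> \<subseteq> P" "is_chain_in le \<sigma>"
  show "continuous_map (top_of_set (closed_simplex P le \<sigma>)) (order_complex Q le') (realization_map f)"
  proof (rule cont_to_oc)
    show "finite (f ` \<sigma>)" using s by simp
    have "continuous_on (closed_simplex P le \<sigma>) (\<lambda>x. \<lambda>y. \<Sum>a\<in>{a \<in> \<sigma>. f a = y}. x a)"
      by (intro continuous_on_coordinatewise_then_product continuous_on_sum cont_coord)
    moreover have "continuous_on (closed_simplex P le \<sigma>) (realization_map f) =
       continuous_on (closed_simplex P le \<sigma>) (\<lambda>x. \<lambda>y. \<Sum>a\<in>{a \<in> \<sigma>. f a = y}. x a)"
      by (rule continuous_on_cong) (simp_all add: rm_on_cs[OF _ s(1)])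
    ultimately show "continuous_on (closed_simplex P le \<sigma>) (realization_map f)" by simp
    show "realization_map f ` closed_simplex P le \<sigma> \<subseteq> subcar Q le' (f ` \<sigma>)"
    proof
      fix z assume "z \<in> realization_map f ` closed_simplex P le \<sigma>"
      then obtain x where x: "x \<in> closed_simplex P le \<sigma>" "z = realization_map f x" by blast
      have xr: "x \<in> realization_carrier P le" "osupp x \<subseteq> \<sigma>" using x by (auto simp: closed_simplex_def)
      have "z \<in> realization_carrier Q le'" using rm_carrier[of x P le f Q le', OF xr(1) fP mono] x by simp
      moreover have "osupp z \<subseteq> f ` \<sigma>" using osupp_rm[of f x] xr(2) x(2) by blast
      ultimately show "z \<in> subcar Q le' (f ` \<sigma>)" by (simp add: subcar_def)
    qed
  qed
qed

lemma rm_id: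
  assumes "x \<in> realization_carrier P le"
  shows "realization_map (\<lambda>a. a) x = x"
proof
  fix y
  show "realization_map (\<lambda>a. a) x y = x y"
  proof (cases "y \<in> osupp x")
    case True
    then have "{a \<in> osupp x. a = y} = {y}" by blast
    then show ?thesis by (simp add: rm_apply)
  next
    case False
    then have "{a \<in> osupp x. a = y} = {}" by blast
    then show ?thesis using False by (simp add: rm_apply osupp_def)
  qed
qed

lemma rm_cong:
  assumes "\<And>a. a \<in> osupp x \<Longrightarrow> f a = g a"
  shows "realization_map f x = realization_map g x"
proof
  fix y
  have "{a \<in> osupp x. f a = y} = {a \<in> osupp x. g a = y}"
    by (rule Collect_cong) (use assms in auto)
  then show "realization_map f x y = realization_map g x y" by (simp add: rm_apply)
qed

lemma osupp_rm_eq: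
  assumes x: "x \<in> realization_carrier P le"
  shows "osupp (realization_map f x) = f ` osupp x"
proof
  show "osupp (realization_map f x) \<subseteq> f ` osupp x" by (rule osupp_rm)
  show "f ` osupp x \<subseteq> osupp (realization_map f x)"
  proof
    fix y assume "y \<in> f ` osupp x"
    then obtain a where a: "a \<in> osupp x" "f a = y" by blast
    note xf = rc_facts[OF x]
    have "x a > 0" using a(1) xf(4)[of a] by (simp add: osupp_def less_le)
    moreover have "x a \<le> (\<Sum>b\<in>{b \<in> osupp x. f b = y}. x b)"
      by (rule member_le_sum) (use a xf in auto)
    ultimately have "realization_map f x y > 0" unfolding rm_apply by linarith
    then show "y \<in> osupp (realization_map f x)" by (simp add: osupp_def)
  qed
qed

lemma rm_comp:
  assumes x: "x \<in> realization_carrier P le"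
  shows "realization_map g (realization_map f x) = realization_map (g \<circ> f) x"
proof
  fix z
  note xf = rc_facts[OF x]
  have "realization_map g (realization_map f x) z
      = (\<Sum>y\<in>{y \<in> f ` osupp x. g y = z}. \<Sum>a\<in>{a \<in> osupp x. f a = y}. x a)"
    unfolding rm_apply[of g] osupp_rm_eq[OF x] by (simp add: rm_apply)
  also have "\<dots> = (\<Sum>y\<in>{y \<in> f ` osupp x. g y = z}. \<Sum>a\<in>{a \<in> {a \<in> osupp x. g (f a) = z}. f a = y}. x a)"
  proof (rule sum.cong[OF refl])
    fix y assume "y \<in> {y \<in> f ` osupp x. g y = z}"
    then have "{a \<in> osupp x. f a = y} = {a \<in> {a \<in> osupp x. g (f a) = z}. f a = y}" by auto
    then show "(\<Sum>a\<in>{a \<in> osupp x. f a = y}. x a) = (\<Sum>a\<in>{a \<in> {a \<in> osupp x. g (f a) = z}. f a = y}. x a)"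
      by simp
  qed
  also have "\<dots> = (\<Sum>a\<in>{a \<in> osupp x. g (f a) = z}. x a)"
    by (rule sum.group) (use xf(1) in auto)
  finally show "realization_map g (realization_map f x) z = realization_map (g \<circ> f) x z"
    by (simp add: rm_apply)
qed


definition above :: "('a set \<Rightarrow> real) \<Rightarrow> 'a set set \<Rightarrow> 'a set \<Rightarrow> real" where
  "above x S a = (\<Sum>b\<in>{b \<in> S. a \<subset> b}. x b)"

definition mt :: "real \<Rightarrow> ('a set \<Rightarrow> real) \<Rightarrow> 'a set set \<Rightarrow> 'a set \<Rightarrow> real" where
  "mt t x S a = min (x a) (max 0 (t - above x S a))"

definition homt :: "('a set \<Rightarrow> 'b) \<Rightarrow> ('a set \<Rightarrow> 'b) \<Rightarrow> 'a set set \<Rightarrow> real \<times> ('a set \<Rightarrow> real) \<Rightarrow> 'b \<Rightarrow> real" where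
  "homt f g S z = (\<lambda>y. \<Sum>a\<in>S. (snd z a - mt (fst z) (snd z) S a) * (if y = f a then 1 else 0)
       + mt (fst z) (snd z) S a * (if y = g a then 1 else 0))"

definition homf :: "('a set \<Rightarrow> 'b) \<Rightarrow> ('a set \<Rightarrow> 'b) \<Rightarrow> real \<times> ('a set \<Rightarrow> real) \<Rightarrow> 'b \<Rightarrow> real" where
  "homf f g z = homt f g (osupp (snd z)) z"

lemma above_nonneg: "(\<And>a. 0 \<le> x a) \<Longrightarrow> 0 \<le> above x S a"
  unfolding above_def by (rule sum_nonneg) auto

lemma mt_bounds: "0 \<le> x a \<Longrightarrow> 0 \<le> mt t x S a \<and> mt t x S a \<le> x a"
  unfolding mt_def by auto

lemma above_mono_key:
  assumes fin: "finite S" and nn: "\<And>a. 0 \<le> x a" and a1: "a1 \<in> S" and lt: "a2 \<subset> a1"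
  shows "x a1 + above x S a1 \<le> above x S a2"
proof -
  have "x a1 + above x S a1 = sum x (insert a1 {b \<in> S. a1 \<subset> b})"
    unfolding above_def using fin by (subst sum.insert) auto
  also have "\<dots> \<le> sum x {b \<in> S. a2 \<subset> b}"
    by (rule sum_mono2) (use fin a1 lt nn in auto)
  finally show ?thesis by (simp add: above_def)
qed

lemma mt_key:
  assumes fin: "finite S" and nn: "\<And>a. 0 \<le> x a" and a1: "a1 \<in> S" and lt: "a2 \<subset> a1"
    and pos: "mt t x S a2 > 0"
  shows "mt t x S a1 = x a1"
proof -
  have "t - above x S a2 > 0" using pos unfolding mt_def by linarith
  then have "t - above x S a1 \<ge> x a1" using above_mono_key[of S x a1 a2, OF fin nn a1 lt] by linarith
  then show ?thesis unfolding mt_def using nn[of a1] by linarith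
qed

lemma homt_nonzero:
  assumes "homt f g S z y \<noteq> 0"
  shows "\<exists>a\<in>S. (y = f a \<and> snd z a - mt (fst z) (snd z) S a \<noteq> 0) \<or> (y = g a \<and> mt (fst z) (snd z) S a \<noteq> 0)"
proof (rule ccontr)
  assume "\<not> ?thesis"
  then have "\<forall>a\<in>S. (snd z a - mt (fst z) (snd z) S a) * (if y = f a then 1 else 0)
       + mt (fst z) (snd z) S a * (if y = g a then 1 else 0) = 0" by auto
  then have "homt f g S z y = 0" unfolding homt_def by (simp add: sum.neutral)
  then show False using assms by simp
qed

lemma homt_sum:
  assumes fin: "finite S" and C: "finite C" "f ` S \<subseteq> C" "g ` S \<subseteq> C"
  shows "sum (homt f g S z) C = sum (snd z) S"
proof -
  have "sum (homt f g S z) C = (\<Sum>a\<in>S. \<Sum>y\<in>C. (snd z a - mt (fst z) (snd z) S a) * (if y = f a then 1 else 0)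
       + mt (fst z) (snd z) S a * (if y = g a then 1 else 0))"
    unfolding homt_def by (rule sum.swap)
  also have "\<dots> = (\<Sum>a\<in>S. snd z a)"
  proof (rule sum.cong[OF refl])
    fix a assume a: "a \<in> S"
    have e1: "(\<Sum>y\<in>C. (snd z a - mt (fst z) (snd z) S a) * (if y = f a then 1 else 0)
       + mt (fst z) (snd z) S a * (if y = g a then 1 else 0))
       = (snd z a - mt (fst z) (snd z) S a) * (\<Sum>y\<in>C. (if y = f a then 1 else 0))
         + mt (fst z) (snd z) S a * (\<Sum>y\<in>C. (if y = g a then 1 else 0))"
      by (simp add: sum.distrib sum_distrib_left)
    have fa: "f a \<in> C" "g a \<in> C" using a C by auto
    have e2: "(\<Sum>y\<in>C. (if y = f a then 1 else 0)) = (1::real)" using fa(1) C(1) by (simp add: sum.delta)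
    have e3: "(\<Sum>y\<in>C. (if y = g a then 1 else 0)) = (1::real)" using fa(2) C(1) by (simp add: sum.delta)
    show "(\<Sum>y\<in>C. (snd z a - mt (fst z) (snd z) S a) * (if y = f a then 1 else 0)
       + mt (fst z) (snd z) S a * (if y = g a then 1 else 0)) = snd z a"
      unfolding e1 e2 e3 by simp
  qed
  finally show ?thesis .
qed

lemma osupp_homt: "osupp (homt f g S z) \<subseteq> f ` S \<union> g ` S"
proof
  fix y assume "y \<in> osupp (homt f g S z)"
  then have "homt f g S z y \<noteq> 0" by (simp add: osupp_def)
  from homt_nonzero[OF this] show "y \<in> f ` S \<union> g ` S" by blast
qed

lemma homf_carrier:
  assumes x: "x \<in> realization_carrier P (\<subseteq>)"
    and fP: "\<And>a. a \<in> P \<Longrightarrow> f a \<in> Q" and gP: "\<And>a. a \<in> P \<Longrightarrow> g a \<in> Q"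
    and fm: "\<And>a b. a \<in> P \<Longrightarrow> b \<in> P \<Longrightarrow> a \<subseteq> b \<Longrightarrow> f a \<subseteq> f b"
    and gm: "\<And>a b. a \<in> P \<Longrightarrow> b \<in> P \<Longrightarrow> a \<subseteq> b \<Longrightarrow> g a \<subseteq> g b"
    and fg: "\<And>a. a \<in> P \<Longrightarrow> f a \<subseteq> g a"
  shows "homf f g (t, x) \<in> realization_carrier Q (\<subseteq>)"
proof -
  note xf = rc_facts[OF x]
  let ?S = "osupp x"
  let ?h = "homf f g (t, x)"
  have h: "?h = homt f g ?S (t,x)" by (simp add: homf_def)
  have sub: "osupp ?h \<subseteq> f ` ?S \<union> g ` ?S" unfolding h by (rule osupp_homt)
  have finC: "finite (f ` ?S \<union> g ` ?S)" using xf(1) by simp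
  have mb: "\<And>a. 0 \<le> mt t x ?S a \<and> mt t x ?S a \<le> x a" using mt_bounds xf(4) by blast
  have nz: "\<exists>a\<in>?S. (y = f a \<and> x a - mt t x ?S a \<noteq> 0) \<or> (y = g a \<and> mt t x ?S a \<noteq> 0)"
    if "y \<in> osupp ?h" for y
    using homt_nonzero[of f g ?S "(t,x)" y] that unfolding h by (simp add: osupp_def)
  show ?thesis unfolding realization_carrier_def
  proof (intro CollectI conjI allI)
    show "finite (osupp ?h)" using finite_subset[OF sub finC] .
    show "osupp ?h \<subseteq> Q" using sub xf(2) fP gP by blast
    show "0 \<le> ?h y" for y unfolding h homt_def
      by (rule sum_nonneg) (use mb in \<open>auto intro!: add_nonneg_nonneg mult_nonneg_nonneg\<close>)
    have "sum ?h (osupp ?h) = sum ?h (f ` ?S \<union> g ` ?S)" by (rule sum_osupp_eq[OF finC sub])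
    also have "\<dots> = sum x ?S" unfolding h by (subst homt_sum) (use xf(1) in auto)
    finally show "sum ?h (osupp ?h) = 1" using xf(5) by simp
    show "is_chain_in (\<subseteq>) (osupp ?h)" unfolding is_chain_in_def
    proof (intro ballI)
      fix y1 y2 assume y1: "y1 \<in> osupp ?h" and y2: "y2 \<in> osupp ?h"
      have ch: "\<And>a b. a \<in> ?S \<Longrightarrow> b \<in> ?S \<Longrightarrow> a \<subseteq> b \<or> b \<subseteq> a"
        using xf(3) unfolding is_chain_in_def by blast
      have mixed: "y1 \<subseteq> y2 \<or> y2 \<subseteq> y1"
        if a1: "a1 \<in> ?S" "y1 = f a1" "x a1 - mt t x ?S a1 \<noteq> 0"
        and a2: "a2 \<in> ?S" "y2 = g a2" "mt t x ?S a2 \<noteq> 0" for a1 a2 y1 y2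
      proof -
        have P1: "a1 \<in> P" and P2: "a2 \<in> P" using a1 a2 xf(2) by auto
        consider "a1 \<subseteq> a2" | "a2 \<subset> a1" using ch[OF a1(1) a2(1)] by blast
        then show ?thesis
        proof cases
          case 1
          then have "f a1 \<subseteq> f a2" using fm P1 P2 by blast
          then show ?thesis using fg[OF P2] a1 a2 by blast
        next
          case 2
          have "mt t x ?S a2 > 0" using mb[of a2] a2(3) by linarith
          then have "mt t x ?S a1 = x a1" by (rule mt_key[OF xf(1) xf(4) a1(1) 2])
          then show ?thesis using a1(3) by simp
        qed
      qed
      from nz[OF y1] obtain a1 where a1: "a1 \<in> ?S"
        "(y1 = f a1 \<and> x a1 - mt t x ?S a1 \<noteq> 0) \<or> (y1 = g a1 \<and> mt t x ?S a1 \<noteq> 0)" by blast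
      from nz[OF y2] obtain a2 where a2: "a2 \<in> ?S"
        "(y2 = f a2 \<and> x a2 - mt t x ?S a2 \<noteq> 0) \<or> (y2 = g a2 \<and> mt t x ?S a2 \<noteq> 0)" by blast
      have P1: "a1 \<in> P" and P2: "a2 \<in> P" using a1 a2 xf(2) by auto
      have c12: "a1 \<subseteq> a2 \<or> a2 \<subseteq> a1" using ch[OF a1(1) a2(1)] .
      show "y1 \<subseteq> y2 \<or> y2 \<subseteq> y1"
        using a1(2)
      proof
        assume A1: "y1 = f a1 \<and> x a1 - mt t x ?S a1 \<noteq> 0"
        show ?thesis using a2(2)
        proof
          assume "y2 = f a2 \<and> x a2 - mt t x ?S a2 \<noteq> 0"
          then show ?thesis using A1 c12 fm[OF P1 P2] fm[OF P2 P1] by blast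
        next
          assume "y2 = g a2 \<and> mt t x ?S a2 \<noteq> 0"
          then show ?thesis using mixed[OF a1(1) _ _ a2(1)] A1 by blast
        qed
      next
        assume A1: "y1 = g a1 \<and> mt t x ?S a1 \<noteq> 0"
        show ?thesis using a2(2)
        proof
          assume "y2 = f a2 \<and> x a2 - mt t x ?S a2 \<noteq> 0"
          then show ?thesis using mixed[OF a2(1) _ _ a1(1)] A1 by blast
        next
          assume "y2 = g a2 \<and> mt t x ?S a2 \<noteq> 0"
          then show ?thesis using A1 c12 gm[OF P1 P2] gm[OF P2 P1] by blast
        qed
      qed
    qed
  qed
qed


lemma mt_0: "(\<And>a. 0 \<le> x a) \<Longrightarrow> mt 0 x S a = 0"
  using above_nonneg[of x S a] unfolding mt_def by (metis diff_0 max_def min_def neg_le_0_iff_le order_antisym)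

lemma mt_1:
  assumes x: "x \<in> realization_carrier P le" and a: "a \<in> osupp x"
  shows "mt 1 x (osupp x) a = x a"
proof -
  note xf = rc_facts[OF x]
  have "x a + above x (osupp x) a = sum x (insert a {b \<in> osupp x. a \<subset> b})"
    unfolding above_def using xf(1) by (subst sum.insert) auto
  also have "\<dots> \<le> sum x (osupp x)"
    by (rule sum_mono2) (use xf a in auto)
  finally have "x a \<le> 1 - above x (osupp x) a" using xf(5) by simp
  then show ?thesis unfolding mt_def using xf(4)[of a] by linarith
qed

lemma homf_0:
  assumes x: "x \<in> realization_carrier P le"
  shows "homf f g (0, x) = realization_map f x"
proof
  fix y
  note xf = rc_facts[OF x]
  have "homf f g (0, x) y = (\<Sum>a\<in>osupp x. (if f a = y then x a else 0))"
    unfolding homf_def homt_def using mt_0[of x, OF xf(4)] by (intro sum.cong) auto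
  also have "\<dots> = realization_map f x y"
    unfolding rm_apply using xf(1) by (simp add: sum.inter_filter)
  finally show "homf f g (0, x) y = realization_map f x y" .
qed

lemma homf_1:
  assumes x: "x \<in> realization_carrier P le"
  shows "homf f g (1, x) = realization_map g x"
proof
  fix y
  note xf = rc_facts[OF x]
  have "homf f g (1, x) y = (\<Sum>a\<in>osupp x. (if g a = y then x a else 0))"
    unfolding homf_def homt_def using mt_1[OF x] by (intro sum.cong) auto
  also have "\<dots> = realization_map g x y"
    unfolding rm_apply using xf(1) by (simp add: sum.inter_filter)
  finally show "homf f g (1, x) y = realization_map g x y" .
qed

lemma homf_on_cs:
  assumes x: "x \<in> closed_simplex P le \<sigma>" and fin: "finite \<sigma>"
  shows "homf f g (t, x) = homt f g \<sigma> (t, x)"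
proof -
  have xr: "x \<in> realization_carrier P le" and s: "osupp x \<subseteq> \<sigma>" using x by (auto simp: closed_simplex_def)
  note xf = rc_facts[OF xr]
  have ab: "above x (osupp x) a = above x \<sigma> a" for a
    unfolding above_def by (rule sum.mono_neutral_left) (use s fin in \<open>auto simp: osupp_def\<close>)
  have m: "mt t x (osupp x) a = mt t x \<sigma> a" for a unfolding mt_def ab ..
  have z: "mt t x \<sigma> a = 0" if "a \<notin> osupp x" for a
    using that unfolding mt_def osupp_def by auto
  show ?thesis
  proof
    fix y
    show "homf f g (t, x) y = homt f g \<sigma> (t, x) y"
      unfolding homf_def homt_def fst_conv snd_conv m
      by (rule sum.mono_neutral_left) (use s fin z in \<open>auto simp: osupp_def\<close>)
  qed
qed

lemma cont_snd_coord [continuous_intros]: "continuous_on S (\<lambda>z :: real \<times> ('a \<Rightarrow> real). snd z a)"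
proof -
  have "continuous_on UNIV ((\<lambda>x :: 'a \<Rightarrow> real. x a) \<circ> snd)"
    by (rule continuous_on_compose) (auto intro: continuous_on_snd continuous_on_id cont_coord)
  then have "continuous_on UNIV (\<lambda>z :: real \<times> ('a \<Rightarrow> real). snd z a)" by (simp add: o_def)
  then show ?thesis by (rule continuous_on_subset) simp
qed

lemma homt_cont: "continuous_on S (homt f g \<sigma>)"
  unfolding homt_def mt_def above_def
  by (intro continuous_on_coordinatewise_then_product continuous_intros)

lemma rm_homotopic:
  assumes fP: "\<And>a. a \<in> P \<Longrightarrow> f a \<in> Q" and gP: "\<And>a. a \<in> P \<Longrightarrow> g a \<in> Q"
    and fm: "\<And>a b. a \<in> P \<Longrightarrow> b \<in> P \<Longrightarrow> a \<subseteq> b \<Longrightarrow> f a \<subseteq> f b"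
    and gm: "\<And>a b. a \<in> P \<Longrightarrow> b \<in> P \<Longrightarrow> a \<subseteq> b \<Longrightarrow> g a \<subseteq> g b"
    and fg: "\<And>a. a \<in> P \<Longrightarrow> f a \<subseteq> g a"
  shows "homotopic_with (\<lambda>h. True) (order_complex P (\<subseteq>)) (order_complex Q (\<subseteq>))
           (realization_map f) (realization_map g)"
proof -
  have cont: "continuous_map (prod_topology (top_of_set {0..1::real}) (order_complex P (\<subseteq>)))
      (order_complex Q (\<subseteq>)) (homf f g)"
  proof (rule cont_from_prod_oc)
    fix t :: real and x assume "t \<in> {0..1}" "x \<in> realization_carrier P (\<subseteq>)"
    then show "homf f g (t, x) \<in> topspace (order_complex Q (\<subseteq>))"
      unfolding topspace_oc by (intro homf_carrier[OF _ fP gP fm gm fg])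
  next
    fix \<sigma> assume s: "finite \<sigma>" "\<sigma> \<subseteq> P" "is_chain_in (\<subseteq>) \<sigma>"
    show "continuous_map (top_of_set ({0..1} \<times> closed_simplex P (\<subseteq>) \<sigma>)) (order_complex Q (\<subseteq>)) (homf f g)"
    proof (rule cont_to_oc)
      show "finite (f ` \<sigma> \<union> g ` \<sigma>)" using s by simp
      have "continuous_on ({0..1::real} \<times> closed_simplex P (\<subseteq>) \<sigma>) (homf f g) =
            continuous_on ({0..1::real} \<times> closed_simplex P (\<subseteq>) \<sigma>) (homt f g \<sigma>)"
        by (rule continuous_on_cong) (auto simp: homf_on_cs[OF _ s(1)])
      then show "continuous_on ({0..1::real} \<times> closed_simplex P (\<subseteq>) \<sigma>) (homf f g)"
        using homt_cont by blast
      show "homf f g ` ({0..1} \<times> closed_simplex P (\<subseteq>) \<sigma>) \<subseteq> subcar Q (\<subseteq>) (f ` \<sigma> \<union> g ` \<sigma>)"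
      proof
        fix w assume "w \<in> homf f g ` ({0..1} \<times> closed_simplex P (\<subseteq>) \<sigma>)"
        then obtain t x where w: "w = homf f g (t, x)" "x \<in> closed_simplex P (\<subseteq>) \<sigma>" by blast
        have xr: "x \<in> realization_carrier P (\<subseteq>)" "osupp x \<subseteq> \<sigma>" using w(2) by (auto simp: closed_simplex_def)
        have "w \<in> realization_carrier Q (\<subseteq>)" using homf_carrier[OF xr(1) fP gP fm gm fg] w by simp
        moreover have "osupp w \<subseteq> f ` \<sigma> \<union> g ` \<sigma>"
        proof -
          have "osupp w \<subseteq> f ` osupp x \<union> g ` osupp x"
            using osupp_homt[of f g "osupp x" "(t,x)"] w(1) unfolding homf_def by simp
          then show ?thesis using xr(2) by blast
        qed
        ultimately show "w \<in> subcar Q (\<subseteq>) (f ` \<sigma> \<union> g ` \<sigma>)" by (simp add: subcar_def)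
      qed
    qed
  qed
  have triv: "\<And>h k. (\<And>x. x \<in> topspace (order_complex P (\<subseteq>)) \<Longrightarrow> h x = k x) \<Longrightarrow> (True \<longleftrightarrow> True)"
    by simp
  show ?thesis
  proof (rule homotopic_with[THEN iffD2], simp, rule exI[where x="homf f g"], intro conjI ballI)
    show "continuous_map (prod_topology (top_of_set {0..1::real}) (order_complex P (\<subseteq>)))
      (order_complex Q (\<subseteq>)) (homf f g)" by (rule cont)
    fix x assume "x \<in> topspace (order_complex P (\<subseteq>))"
    then have x: "x \<in> realization_carrier P (\<subseteq>)" by (simp add: topspace_oc)
    show "homf f g (0, x) = realization_map f x" by (rule homf_0[OF x])
    show "homf f g (1, x) = realization_map g x" by (rule homf_1[OF x])
  qed simp
qed



lemma vl_inj: "(vec_lambda x :: 'a ^ 'n) = vec_lambda y \<longleftrightarrow> x = y"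
proof
  assume "(vec_lambda x :: 'a ^ 'n) = vec_lambda y"
  then have "\<And>i. (vec_lambda x :: 'a ^ 'n) $ i = vec_lambda y $ i" by simp
  then show "x = y" by (simp add: fun_eq_iff)
qed simp

lemma vl_add: "vec_lambda (vadd x y) = (vec_lambda x + vec_lambda y :: 'a::field ^ 'n)"
  by (simp add: vec_eq_iff vadd_def)

lemma vl_scale: "vec_lambda (vscale c x) = (c *s vec_lambda x :: 'a::field ^ 'n)"
  by (simp add: vec_eq_iff vscale_def)

lemma vl_zero: "vec_lambda vzero = (0 :: 'a::field ^ 'n)"
  by (simp add: vec_eq_iff vzero_def)

lemma vl_subspace:
  fixes W :: "('n::finite \<Rightarrow> 'a::field) set"
  assumes "is_K_subspace W"
  shows "vec.subspace (vec_lambda ` W)"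
  unfolding vec.subspace_def
proof (intro conjI ballI allI)
  show "0 \<in> vec_lambda ` W" using assms vl_zero[where 'a='a and 'n='n]
    unfolding is_K_subspace_def by (metis image_eqI)
  fix x y assume x: "x \<in> vec_lambda ` W" and y: "y \<in> vec_lambda ` W"
  then obtain a b where ab: "a \<in> W" "b \<in> W" "x = vec_lambda a" "y = vec_lambda b" by blast
  then have "x + y = vec_lambda (vadd a b)" by (simp add: vl_add)
  moreover have "vadd a b \<in> W" using assms ab unfolding is_K_subspace_def by blast
  ultimately show "x + y \<in> vec_lambda ` W" by blast
next
  fix c x assume x: "x \<in> vec_lambda ` W"
  then obtain a where a: "a \<in> W" "x = vec_lambda a" by blast
  then have "c *s x = vec_lambda (vscale c a)" by (simp add: vl_scale)
  moreover have "vscale c a \<in> W" using assms a unfolding is_K_subspace_def by blast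
  ultimately show "c *s x \<in> vec_lambda ` W" by blast
qed

lemma vl_dim_lt:
  fixes W :: "('n::finite \<Rightarrow> 'a::field) set"
  assumes "is_K_subspace W" "W \<noteq> UNIV"
  shows "vec.dim (vec_lambda ` W) \<le> CARD('n) - 1"
proof -
  have sub: "vec.subspace (vec_lambda ` W)" by (rule vl_subspace[OF assms(1)])
  have le: "vec.dim (vec_lambda ` W) \<le> CARD('n)"
    by (rule dim_subset_UNIV_cart_gen)
  have "vec.dim (vec_lambda ` W) \<noteq> CARD('n)"
  proof
    assume "vec.dim (vec_lambda ` W) = CARD('n)"
    then have "vec.dim (UNIV :: ('a ^ 'n) set) \<le> vec.dim (vec_lambda ` W)"
      by (simp add: vec_dim_card card_cart_basis)
    then have all: "vec_lambda ` W = (UNIV :: ('a ^ 'n) set)"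
      by (rule vec.subspace_dim_equal[OF sub vec.subspace_UNIV subset_UNIV])
    have "W = UNIV"
    proof (rule set_eqI, rule iffI)
      fix x :: "'n \<Rightarrow> 'a" assume "x \<in> UNIV"
      have "vec_lambda x \<in> vec_lambda ` W" using all by simp
      then obtain w where "w \<in> W" "(vec_lambda w :: 'a ^ 'n) = vec_lambda x" by auto
      then show "x \<in> W" by (simp add: vl_inj)
    qed simp
    then show False using assms(2) by simp
  qed
  then show ?thesis using le by linarith
qed

lemma vl_dim_psub:
  fixes W W' :: "('n::finite \<Rightarrow> 'a::field) set"
  assumes "is_K_subspace W" "is_K_subspace W'" "W' \<subseteq> W" "W' \<noteq> W"
  shows "vec.dim (vec_lambda ` W') < vec.dim (vec_lambda ` W)"
proof -
  have "vec_lambda ` W' \<subset> (vec_lambda ` W :: ('a ^ 'n) set)"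
  proof
    show "vec_lambda ` W' \<subseteq> (vec_lambda ` W :: ('a ^ 'n) set)" using assms(3) by blast
    show "vec_lambda ` W' \<noteq> (vec_lambda ` W :: ('a ^ 'n) set)"
    proof
      assume e: "vec_lambda ` W' = (vec_lambda ` W :: ('a ^ 'n) set)"
      have "W \<subseteq> W'"
      proof
        fix x assume "x \<in> W"
        then have "(vec_lambda x :: 'a ^ 'n) \<in> vec_lambda ` W'" using e by blast
        then show "x \<in> W'" by (auto simp: vl_inj)
      qed
      then show False using assms(3,4) by blast
    qed
  qed
  note ps = this
  have e1: "vec.span (vec_lambda ` W) = (vec_lambda ` W :: ('a ^ 'n) set)"
    using vl_subspace[OF assms(1)] by (simp only: vec.span_eq_iff)
  have e2: "vec.span (vec_lambda ` W') = (vec_lambda ` W' :: ('a ^ 'n) set)"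
    using vl_subspace[OF assms(2)] by (simp only: vec.span_eq_iff)
  have "vec.span (vec_lambda ` W') \<subset> vec.span (vec_lambda ` W :: ('a ^ 'n) set)"
    unfolding e1 e2 by (rule ps)
  then show ?thesis by (rule vec.dim_psubset)
qed

lemma vl_dim0:
  fixes W :: "('n::finite \<Rightarrow> 'a::field) set"
  assumes "is_K_subspace W" "vec.dim (vec_lambda ` W) = 0"
  shows "W = {vzero}"
proof -
  have "vec_lambda ` W \<subseteq> {0 :: 'a ^ 'n}" using assms(2) by simp
  then have "\<And>w. w \<in> W \<Longrightarrow> w = vzero"
  proof -
    fix w assume "w \<in> W"
    then have "(vec_lambda w :: 'a ^ 'n) = 0" using \<open>vec_lambda ` W \<subseteq> {0 :: 'a ^ 'n}\<close> by blast
    then have "(vec_lambda w :: 'a ^ 'n) = vec_lambda vzero" by (simp add: vl_zero)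
    then show "w = vzero" by (simp only: vl_inj)
  qed
  moreover have "vzero \<in> W" using assms(1) by (simp add: is_K_subspace_def)
  ultimately show ?thesis by blast
qed

definition spanK :: "('n \<Rightarrow> 'a::field) set \<Rightarrow> ('n \<Rightarrow> 'a) set" where
  "spanK U = {vscale c u | c u. u \<in> U}"

lemma vl_comb:
  "(vec_lambda (\<lambda>i. \<Sum>j<n. c j * g j i) :: 'a::field ^ 'n) = (\<Sum>j<n. c j *s vec_lambda (g j))"
  by (simp add: vec_eq_iff sum_component)

context
  fixes v :: "'k::field_char_0 \<Rightarrow> int"
  assumes nv: "normalized_discrete_valuation v"
begin

lemma v_mult: "x \<noteq> 0 \<Longrightarrow> y \<noteq> 0 \<Longrightarrow> v (x * y) = v x + v y"
  using nv unfolding normalized_discrete_valuation_def by blast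

lemma v_add: "x \<noteq> 0 \<Longrightarrow> y \<noteq> 0 \<Longrightarrow> x + y \<noteq> 0 \<Longrightarrow> min (v x) (v y) \<le> v (x + y)"
  using nv unfolding normalized_discrete_valuation_def by blast

lemma v_one: "v 1 = 0"
  using v_mult[of 1 1] by simp

lemma v_inverse: "x \<noteq> 0 \<Longrightarrow> v (inverse x) = - v x"
  using v_mult[of x "inverse x"] v_one by simp

lemma v_minus_one: "v (-1) = 0"
  using v_mult[of "-1" "-1"] v_one by simp

lemma v_uminus: "x \<noteq> 0 \<Longrightarrow> v (- x) = v x"
  using v_mult[of "-1" x] v_minus_one by simp

lemma v_divide: "x \<noteq> 0 \<Longrightarrow> y \<noteq> 0 \<Longrightarrow> v (x / y) = v x - v y"
  using v_mult[of x "inverse y"] v_inverse[of y] by (simp add: divide_inverse)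

lemma OK_mem: "x \<in> valuation_ring v \<longleftrightarrow> x = 0 \<or> 0 \<le> v x"
  by (simp add: valuation_ring_def val_ge_def)

lemma OK_0: "0 \<in> valuation_ring v" by (simp add: OK_mem)
lemma OK_1: "1 \<in> valuation_ring v" by (simp add: OK_mem v_one)

lemma OK_mult: "x \<in> valuation_ring v \<Longrightarrow> y \<in> valuation_ring v \<Longrightarrow> x * y \<in> valuation_ring v"
proof -
  assume a: "x \<in> valuation_ring v" "y \<in> valuation_ring v"
  show ?thesis
  proof (cases "x = 0 \<or> y = 0")
    case True then show ?thesis by (auto simp: OK_mem)
  next
    case False
    then have "v (x * y) = v x + v y" by (simp add: v_mult)
    then show ?thesis using a False by (simp add: OK_mem)
  qed
qed

lemma OK_add: "x \<in> valuation_ring v \<Longrightarrow> y \<in> valuation_ring v \<Longrightarrow> x + y \<in> valuation_ring v"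
  unfolding OK_mem using v_add[of x y] by fastforce

lemma OK_uminus: "x \<in> valuation_ring v \<Longrightarrow> - x \<in> valuation_ring v"
proof -
  assume a: "x \<in> valuation_ring v"
  show ?thesis
  proof (cases "x = 0")
    case True then show ?thesis by (auto simp: OK_mem)
  next
    case False
    then have "v (- x) = v x" by (simp add: v_uminus)
    then show ?thesis using a False by (simp add: OK_mem)
  qed
qed

lemma OK_diff: "x \<in> valuation_ring v \<Longrightarrow> y \<in> valuation_ring v \<Longrightarrow> x - y \<in> valuation_ring v"
  using OK_add[of x "- y"] OK_uminus[of y] by simp

lemma OK_div: "y \<noteq> 0 \<Longrightarrow> x = 0 \<or> v y \<le> v x \<Longrightarrow> x / y \<in> valuation_ring v"
proof -
  assume a: "y \<noteq> 0" "x = 0 \<or> v y \<le> v x"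
  show ?thesis
  proof (cases "x = 0")
    case True then show ?thesis by (auto simp: OK_mem)
  next
    case False
    then have "v (x / y) = v x - v y" using a by (simp add: v_divide)
    then show ?thesis using a False by (simp add: OK_mem)
  qed
qed

lemma OK_sum: "(\<And>j. j \<in> A \<Longrightarrow> f j \<in> valuation_ring v) \<Longrightarrow> sum f A \<in> valuation_ring v"
proof (induction A rule: infinite_finite_induct)
  case (infinite A) then show ?case by (simp add: OK_0)
next
  case empty then show ?case by (simp add: OK_0)
next
  case (insert x F) then show ?case by (simp add: OK_add)
qed

lemma one_not_pi_mult:
  assumes "v \<pi> = 1" "\<pi> \<noteq> 0" "c \<in> valuation_ring v"
  shows "1 \<noteq> \<pi> * c"
proof
  assume e: "1 = \<pi> * c"
  then have "c \<noteq> 0" by auto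
  then have "v 1 = v \<pi> + v c" using e v_mult[of \<pi> c] assms(2) by simp
  then show False using assms(1,3) v_one \<open>c \<noteq> 0\<close> unfolding OK_mem by simp
qed

lemma Ksub_Osub: "is_K_subspace W \<Longrightarrow> is_O_submodule (valuation_ring v) W"
  unfolding is_K_subspace_def is_O_submodule_def by blast

lemma lattice_Osub: "is_O_submodule (valuation_ring v) (std_lattice (valuation_ring v))"
  unfolding is_O_submodule_def std_lattice_def vzero_def vadd_def vscale_def
  by (auto intro: OK_0 OK_add OK_mult)

lemma Osub_Int: "is_O_submodule OK A \<Longrightarrow> is_O_submodule OK B \<Longrightarrow> is_O_submodule OK (A \<inter> B)"
  unfolding is_O_submodule_def by blast

lemma Osub_comb:
  assumes U: "is_O_submodule (valuation_ring v) U"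
  shows "(\<forall>j<(n::nat). g j \<in> U) \<Longrightarrow> (\<forall>j<n. c j \<in> valuation_ring v) \<Longrightarrow> (\<lambda>i. \<Sum>j<n. c j * g j i) \<in> U"
proof (induction n)
  case 0
  have "(\<lambda>i. \<Sum>j<0. c j * g j i) = vzero" by (simp add: vzero_def)
  then show ?case using U by (simp add: is_O_submodule_def)
next
  case (Suc n)
  have e: "(\<lambda>i. \<Sum>j<Suc n. c j * g j i) = vadd (\<lambda>i. \<Sum>j<n. c j * g j i) (vscale (c n) (g n))"
    by (simp add: vadd_def vscale_def)
  have "(\<lambda>i. \<Sum>j<n. c j * g j i) \<in> U" using Suc by simp
  moreover have "vscale (c n) (g n) \<in> U" using Suc.prems U unfolding is_O_submodule_def by simp
  ultimately show ?case unfolding e using U unfolding is_O_submodule_def by blast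
qed

lemma O_span_sub:
  assumes U: "is_O_submodule (valuation_ring v) U" and gs: "set gs \<subseteq> U"
  shows "O_span (valuation_ring v) gs \<subseteq> U"
proof
  fix x assume "x \<in> O_span (valuation_ring v) gs"
  then obtain c where c: "x = (\<lambda>i. \<Sum>j<length gs. c j * (gs ! j) i)" "\<forall>j<length gs. c j \<in> valuation_ring v"
    unfolding O_span_def by blast
  have "\<forall>j<length gs. gs ! j \<in> U" using gs by auto
  then show "x \<in> U" unfolding c(1) using Osub_comb[OF U, of "length gs" "\<lambda>j. gs ! j" c] c(2) by blast
qed

lemma gen_in_O_span:
  assumes "g \<in> set gs"
  shows "g \<in> O_span (valuation_ring v) gs"
proof -
  obtain k where k: "k < length gs" "gs ! k = g" using assms by (auto simp: in_set_conv_nth)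
  define c where "c = (\<lambda>j. if j = k then (1::'k) else 0)"
  have "(\<lambda>i. \<Sum>j<length gs. c j * (gs ! j) i) = g"
  proof
    fix i
    have "(\<Sum>j<length gs. c j * (gs ! j) i) = (\<Sum>j<length gs. if j = k then (gs ! j) i else 0)"
      by (rule sum.cong) (auto simp: c_def)
    also have "\<dots> = g i" using k by simp
    finally show "(\<Sum>j<length gs. c j * (gs ! j) i) = g i" .
  qed
  moreover have "\<forall>j<length gs. c j \<in> valuation_ring v" by (simp add: c_def OK_0 OK_1)
  ultimately show ?thesis unfolding O_span_def by blast
qed

lemma O_span_Nil: "O_span (valuation_ring v) [] = {vzero}"
  by (auto simp: O_span_def vzero_def)

lemma normalize:
  fixes w :: "'n::finite \<Rightarrow> 'k"
  assumes "w \<noteq> vzero"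
  shows "\<exists>i. w i \<noteq> 0 \<and> vscale (inverse (w i)) w \<in> std_lattice (valuation_ring v)"
proof -
  define J where "J = {j. w j \<noteq> 0}"
  have J: "finite J" "J \<noteq> {}" using assms by (auto simp: J_def vzero_def fun_eq_iff)
  define m where "m = Min ((\<lambda>j. v (w j)) ` J)"
  have "m \<in> (\<lambda>j. v (w j)) ` J" unfolding m_def using J by (intro Min_in) auto
  then obtain i where i: "i \<in> J" "v (w i) = m" by blast
  have mle: "\<And>j. j \<in> J \<Longrightarrow> m \<le> v (w j)" unfolding m_def using J by (intro Min_le) auto
  have "vscale (inverse (w i)) w \<in> std_lattice (valuation_ring v)"
    unfolding std_lattice_def vscale_def
  proof (intro CollectI allI)
    fix j
    have "inverse (w i) * w j = w j / w i" by (simp add: divide_inverse mult.commute)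
    moreover have "w j / w i \<in> valuation_ring v"
    proof (rule OK_div)
      show "w i \<noteq> 0" using i by (simp add: J_def)
      show "w j = 0 \<or> v (w i) \<le> v (w j)" using mle[of j] i by (auto simp: J_def)
    qed
    ultimately show "inverse (w i) * w j \<in> valuation_ring v" by simp
  qed
  then show ?thesis using i by (auto simp: J_def)
qed

lemma lattice_gen:
  fixes W :: "('n::finite \<Rightarrow> 'k) set"
  assumes "is_K_subspace W"
  shows "\<exists>gs. length gs \<le> vec.dim (vec_lambda ` W :: ('k ^ 'n) set) \<and>
           W \<inter> std_lattice (valuation_ring v) = O_span (valuation_ring v) gs"
  using assms
proof (induction "vec.dim (vec_lambda ` W :: ('k ^ 'n) set)" arbitrary: W rule: less_induct)
  case less
  let ?L = "std_lattice (valuation_ring v) :: ('n \<Rightarrow> 'k) set"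
  have sub: "is_K_subspace W" by (rule less.prems)
  have z: "vzero \<in> W" using sub by (simp add: is_K_subspace_def)
  have zL: "vzero \<in> ?L" by (simp add: std_lattice_def vzero_def OK_0)
  show ?case
  proof (cases "W = {vzero}")
    case True
    then have "W \<inter> ?L = O_span (valuation_ring v) []" using zL by (simp add: O_span_Nil)
    then show ?thesis by (intro exI[of _ "[]"]) simp
  next
    case False
    then obtain w where w: "w \<in> W" "w \<noteq> vzero" using z by blast
    obtain i where i: "w i \<noteq> 0" "vscale (inverse (w i)) w \<in> ?L" using normalize[OF w(2)] by blast
    define u1 where "u1 = vscale (inverse (w i)) w"
    have u1W: "u1 \<in> W" using sub w(1) by (simp add: u1_def is_K_subspace_def)
    have u1i: "u1 i \<noteq> 0" using i(1) by (simp add: u1_def vscale_def)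
    define Pu where "Pu = (\<lambda>u. u \<in> W \<inter> ?L \<and> u i \<noteq> 0)"
    have "Pu u1" using u1W u1i i(2) by (simp add: Pu_def u1_def)
    then obtain u0 where u0: "Pu u0" "\<forall>u. Pu u \<longrightarrow> nat (v (u0 i)) \<le> nat (v (u i))"
      using ex_has_least_nat[of Pu u1 "\<lambda>u. nat (v (u i))"] by blast
    have vnn: "0 \<le> v (u i)" if "Pu u" for u
    proof -
      have "u i \<in> valuation_ring v" using that by (simp add: Pu_def std_lattice_def)
      then show ?thesis using that by (simp add: OK_mem Pu_def)
    qed
    have minv: "v (u0 i) \<le> v (u i)" if "Pu u" for u
      using u0(2) that vnn[OF that] vnn[OF u0(1)] by fastforce
    have u0W: "u0 \<in> W" "u0 \<in> ?L" "u0 i \<noteq> 0" using u0(1) by (auto simp: Pu_def)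
    define W' where "W' = {x \<in> W. x i = 0}"
    have W'sub: "is_K_subspace W'"
      using sub unfolding W'_def is_K_subspace_def vzero_def vadd_def vscale_def by auto
    have "W' \<subseteq> W" "W' \<noteq> W" using u0W by (auto simp: W'_def)
    then have dlt: "vec.dim (vec_lambda ` W' :: ('k ^ 'n) set) < vec.dim (vec_lambda ` W :: ('k ^ 'n) set)"
      by (intro vl_dim_psub[OF sub W'sub])
    obtain gs' where gs': "length gs' \<le> vec.dim (vec_lambda ` W' :: ('k ^ 'n) set)"
      "W' \<inter> ?L = O_span (valuation_ring v) gs'"
      using less.hyps[OF dlt W'sub] by blast
    have WLsub: "is_O_submodule (valuation_ring v) (W \<inter> ?L)"
      by (rule Osub_Int[OF Ksub_Osub[OF sub] lattice_Osub])
    have eq: "W \<inter> ?L = O_span (valuation_ring v) (u0 # gs')"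
    proof
      show "O_span (valuation_ring v) (u0 # gs') \<subseteq> W \<inter> ?L"
      proof (rule O_span_sub[OF WLsub])
        have "set gs' \<subseteq> W \<inter> ?L"
        proof
          fix g assume "g \<in> set gs'"
          then have "g \<in> W' \<inter> ?L" using gen_in_O_span gs'(2) by blast
          then show "g \<in> W \<inter> ?L" by (auto simp: W'_def)
        qed
        then show "set (u0 # gs') \<subseteq> W \<inter> ?L" using u0W by simp
      qed
    next
      show "W \<inter> ?L \<subseteq> O_span (valuation_ring v) (u0 # gs')"
      proof
        fix u assume u: "u \<in> W \<inter> ?L"
        define c0 where "c0 = u i / u0 i"
        have c0: "c0 \<in> valuation_ring v" unfolding c0_def
        proof (rule OK_div)
          show "u0 i \<noteq> 0" by (rule u0W(3))
          show "u i = 0 \<or> v (u0 i) \<le> v (u i)"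
            using minv[of u] u by (auto simp: Pu_def)
        qed
        define r where "r = vadd u (vscale (- c0) u0)"
        have rW: "r \<in> W" using sub u u0W unfolding r_def is_K_subspace_def by blast
        have rL: "r \<in> ?L" unfolding std_lattice_def
        proof (intro CollectI allI)
          fix k
          have "u k \<in> valuation_ring v" "u0 k \<in> valuation_ring v" using u u0W by (auto simp: std_lattice_def)
          then have "u k - c0 * u0 k \<in> valuation_ring v" using c0 by (intro OK_diff OK_mult)
          then show "r k \<in> valuation_ring v" by (simp add: r_def vadd_def vscale_def)
        qed
        have ri: "r i = 0" using u0W(3) by (simp add: r_def vadd_def vscale_def c0_def)
        have "r \<in> W' \<inter> ?L" using rW rL ri by (simp add: W'_def)
        then obtain c' where c': "r = (\<lambda>k. \<Sum>j<length gs'. c' j * (gs' ! j) k)"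
          "\<forall>j<length gs'. c' j \<in> valuation_ring v"
          using gs'(2) unfolding O_span_def by blast
        define c where "c = (\<lambda>j. if j = 0 then c0 else c' (j - 1))"
        have ueq: "u = (\<lambda>k. \<Sum>j<length (u0 # gs'). c j * ((u0 # gs') ! j) k)"
        proof
          fix k
          have "(\<Sum>j<length (u0 # gs'). c j * ((u0 # gs') ! j) k)
              = c0 * u0 k + (\<Sum>j<length gs'. c' j * (gs' ! j) k)"
            unfolding length_Cons sum.lessThan_Suc_shift by (simp add: c_def)
          also have "\<dots> = c0 * u0 k + r k" using c'(1) by simp
          also have "\<dots> = u k" by (simp add: r_def vadd_def vscale_def)
          finally show "u k = (\<Sum>j<length (u0 # gs'). c j * ((u0 # gs') ! j) k)" by simp
        qed
        have "\<forall>j<length (u0 # gs'). c j \<in> valuation_ring v"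
        proof (intro allI impI)
          fix j assume "j < length (u0 # gs')"
          then show "c j \<in> valuation_ring v" using c0 c'(2) by (cases j) (auto simp: c_def)
        qed
        then show "u \<in> O_span (valuation_ring v) (u0 # gs')"
          unfolding O_span_def using ueq by blast
      qed
    qed
    have "length (u0 # gs') \<le> vec.dim (vec_lambda ` W :: ('k ^ 'n) set)"
      using gs'(1) dlt by simp
    then show ?thesis using eq by blast
  qed
qed

lemma psi_in:
  fixes W :: "('n::finite \<Rightarrow> 'k) set"
  assumes pi: "v \<pi> = 1" "\<pi> \<noteq> 0" and W: "W \<in> tits_building"
  shows "W \<inter> std_lattice (valuation_ring v) \<in> lattice_poset (valuation_ring v) \<pi>"
proof -
  let ?L = "std_lattice (valuation_ring v) :: ('n \<Rightarrow> 'k) set"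
  have sub: "is_K_subspace W" and nz: "W \<noteq> {vzero}" and nU: "W \<noteq> UNIV"
    using W by (auto simp: tits_building_def)
  have z: "vzero \<in> W" using sub by (simp add: is_K_subspace_def)
  obtain w where w: "w \<in> W" "w \<noteq> vzero" using z nz by blast
  obtain i where i: "w i \<noteq> 0" "vscale (inverse (w i)) w \<in> ?L" using normalize[OF w(2)] by blast
  define u1 where "u1 = vscale (inverse (w i)) w"
  have u1W: "u1 \<in> W" using sub w(1) by (simp add: u1_def is_K_subspace_def)
  have u1i: "u1 i = 1" using i(1) by (simp add: u1_def vscale_def)
  have notpi: "\<not> W \<inter> ?L \<subseteq> vscale \<pi> ` ?L"
  proof
    assume "W \<inter> ?L \<subseteq> vscale \<pi> ` ?L"
    then have "u1 \<in> vscale \<pi> ` ?L" using u1W i(2) by (auto simp: u1_def)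
    then obtain y where y: "y \<in> ?L" "u1 = vscale \<pi> y" by blast
    then have "1 = \<pi> * y i" using u1i by (simp add: vscale_def)
    moreover have "y i \<in> valuation_ring v" using y(1) by (simp add: std_lattice_def)
    ultimately show False using one_not_pi_mult[OF pi(1) pi(2)] by blast
  qed
  obtain gs where gs: "length gs \<le> vec.dim (vec_lambda ` W :: ('k ^ 'n) set)"
    "W \<inter> ?L = O_span (valuation_ring v) gs"
    using lattice_gen[OF sub] by blast
  have "length gs \<le> CARD('n) - 1" using gs(1) vl_dim_lt[OF sub nU] by linarith
  then show ?thesis unfolding lattice_poset_def
    using Osub_Int[OF Ksub_Osub[OF sub] lattice_Osub] notpi gs(2) by blast
qed

lemma spanK_in:
  fixes U :: "('n::finite \<Rightarrow> 'k) set"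
  assumes U: "U \<in> lattice_poset (valuation_ring v) \<pi>"
  shows "spanK U \<in> tits_building"
proof -
  let ?L = "std_lattice (valuation_ring v) :: ('n \<Rightarrow> 'k) set"
  have Um: "is_O_submodule (valuation_ring v) U" and Unpi: "\<not> U \<subseteq> vscale \<pi> ` ?L"
    using U by (auto simp: lattice_poset_def)
  obtain gs where gs: "length gs \<le> CARD('n) - 1" "U = O_span (valuation_ring v) gs"
    using U by (auto simp: lattice_poset_def)
  have zU: "vzero \<in> U" using Um by (simp add: is_O_submodule_def)
  have sub: "is_K_subspace (spanK U)" unfolding is_K_subspace_def
  proof (intro conjI ballI allI)
    have "vzero = vscale 0 vzero" by (simp add: vzero_def vscale_def)
    then show "vzero \<in> spanK U" using zU unfolding spanK_def by blast
  next
    fix x y assume x: "x \<in> spanK U" and y: "y \<in> spanK U"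
    obtain c1 u1 where 1: "x = vscale c1 u1" "u1 \<in> U" using x unfolding spanK_def by blast
    obtain c2 u2 where 2: "y = vscale c2 u2" "u2 \<in> U" using y unfolding spanK_def by blast
    show "vadd x y \<in> spanK U"
    proof (cases "c1 = 0 \<or> c2 = 0")
      case True
      then show ?thesis
      proof
        assume c: "c1 = 0"
        then have "vadd x y = vscale c2 u2" using 1 2 by (simp add: vadd_def vscale_def)
        then show ?thesis using 2 unfolding spanK_def by blast
      next
        assume c: "c2 = 0"
        then have "vadd x y = vscale c1 u1" using 1 2 by (simp add: vadd_def vscale_def)
        then show ?thesis using 1 unfolding spanK_def by blast
      qed
    next
      case False
      then have c: "c1 \<noteq> 0" "c2 \<noteq> 0" by auto
      show ?thesis
      proof (cases "v c1 \<le> v c2")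
        case True
        have q: "c2 / c1 \<in> valuation_ring v" using OK_div[of c1 c2] c True by simp
        have "vadd u1 (vscale (c2 / c1) u2) \<in> U" using Um q 1 2 unfolding is_O_submodule_def by blast
        moreover have "vadd x y = vscale c1 (vadd u1 (vscale (c2 / c1) u2))"
          using 1 2 c by (simp add: vadd_def vscale_def fun_eq_iff field_simps)
        ultimately show ?thesis unfolding spanK_def by blast
      next
        case False
        have q: "c1 / c2 \<in> valuation_ring v" using OK_div[of c2 c1] c False by simp
        have "vadd (vscale (c1 / c2) u1) u2 \<in> U" using Um q 1 2 unfolding is_O_submodule_def by blast
        moreover have "vadd x y = vscale c2 (vadd (vscale (c1 / c2) u1) u2)"
          using 1 2 c by (simp add: vadd_def vscale_def fun_eq_iff field_simps)
        ultimately show ?thesis unfolding spanK_def by blast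
      qed
    qed
  next
    fix c x assume x: "x \<in> spanK U"
    obtain c1 u1 where 1: "x = vscale c1 u1" "u1 \<in> U" using x unfolding spanK_def by blast
    have "vscale c x = vscale (c * c1) u1" using 1 by (simp add: vscale_def fun_eq_iff)
    then show "vscale c x \<in> spanK U" using 1 unfolding spanK_def by blast
  qed
  have nz: "spanK U \<noteq> {vzero}"
  proof
    assume e: "spanK U = {vzero}"
    obtain u where u: "u \<in> U" "u \<notin> vscale \<pi> ` ?L" using Unpi by blast
    have "u = vscale 1 u" by (simp add: vscale_def)
    then have "u \<in> spanK U" using u(1) unfolding spanK_def by blast
    then have "u = vzero" using e by blast
    moreover have "vzero = vscale \<pi> vzero" by (simp add: vzero_def vscale_def)
    moreover have "vzero \<in> ?L" by (simp add: std_lattice_def vzero_def OK_0)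
    ultimately show False using u(2) by auto
  qed
  have nU: "spanK U \<noteq> UNIV"
  proof
    assume e: "spanK U = UNIV"
    have "(UNIV :: ('k ^ 'n) set) \<subseteq> vec.span (vec_lambda ` set gs)"
    proof
      fix y :: "'k ^ 'n"
      have "(\<lambda>i. y $ i) \<in> spanK U" using e by simp
      then obtain c u where cu: "(\<lambda>i. y $ i) = vscale c u" "u \<in> U" unfolding spanK_def by blast
      then obtain cj where cj: "u = (\<lambda>i. \<Sum>j<length gs. cj j * (gs ! j) i)"
        using gs(2) unfolding O_span_def by blast
      have "y = vec_lambda (\<lambda>i. y $ i)" by simp
      also have "\<dots> = c *s vec_lambda u" using cu(1) by (simp add: vl_scale)
      also have "\<dots> = c *s (\<Sum>j<length gs. cj j *s vec_lambda (gs ! j))" unfolding cj vl_comb ..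
      finally have ye: "y = c *s (\<Sum>j<length gs. cj j *s vec_lambda (gs ! j))" .
      have "(\<Sum>j<length gs. cj j *s vec_lambda (gs ! j)) \<in> vec.span (vec_lambda ` set gs)"
        by (intro vec.span_sum vec.span_scale vec.span_base) auto
      then show "y \<in> vec.span (vec_lambda ` set gs)" unfolding ye by (rule vec.span_scale)
    qed
    then have "vec.dim (UNIV :: ('k ^ 'n) set) \<le> card (vec_lambda ` set gs :: ('k ^ 'n) set)"
      by (intro vec.dim_le_card) auto
    also have "\<dots> \<le> card (set gs)" by (rule card_image_le) simp
    also have "\<dots> \<le> length gs" by (rule card_length)
    finally have "CARD('n) \<le> length gs" by (simp add: vec_dim_card card_cart_basis)
    moreover have "CARD('n) > 0" by simp
    ultimately show False using gs(1) by linarith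
  qed
  show ?thesis using sub nz nU by (simp add: tits_building_def)
qed

lemma spanK_psi:
  fixes W :: "('n::finite \<Rightarrow> 'k) set"
  assumes W: "is_K_subspace W"
  shows "spanK (W \<inter> std_lattice (valuation_ring v)) = W"
proof
  show "spanK (W \<inter> std_lattice (valuation_ring v)) \<subseteq> W"
    using W unfolding spanK_def is_K_subspace_def by blast
  show "W \<subseteq> spanK (W \<inter> std_lattice (valuation_ring v))"
  proof
    fix w assume w: "w \<in> W"
    show "w \<in> spanK (W \<inter> std_lattice (valuation_ring v))"
    proof (cases "w = vzero")
      case True
      have "vzero = vscale 1 vzero" by (simp add: vscale_def vzero_def)
      moreover have "vzero \<in> std_lattice (valuation_ring v)" by (simp add: std_lattice_def vzero_def OK_0)
      ultimately show ?thesis using True w unfolding spanK_def by blast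
    next
      case False
      obtain i where i: "w i \<noteq> 0" "vscale (inverse (w i)) w \<in> std_lattice (valuation_ring v)"
        using normalize[OF False] by blast
      have "vscale (inverse (w i)) w \<in> W" using W w by (simp add: is_K_subspace_def)
      moreover have "w = vscale (w i) (vscale (inverse (w i)) w)" using i(1) by (simp add: vscale_def fun_eq_iff)
      ultimately show ?thesis using i(2) unfolding spanK_def by blast
    qed
  qed
qed

lemma sub_psi_spanK: "U \<subseteq> std_lattice (valuation_ring v) \<Longrightarrow> U \<subseteq> spanK U \<inter> std_lattice (valuation_ring v)"
proof
  fix u assume "U \<subseteq> std_lattice (valuation_ring v)" "u \<in> U"
  moreover have "u = vscale 1 u" by (simp add: vscale_def)
  ultimately show "u \<in> spanK U \<inter> std_lattice (valuation_ring v)" unfolding spanK_def by blast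
qed

end



theorem mainTheorem12:
  fixes v :: "'k::field_char_0 \<Rightarrow> int" and \<pi> :: 'k
  assumes "p_adic_local_field v"
    and "\<pi> \<noteq> 0" and "v \<pi> = 1"
  defines "OK \<equiv> valuation_ring v"
  defines "\<psi> \<equiv> (\<lambda>W::('n::finite \<Rightarrow> 'k) set. W \<inter> std_lattice OK)"
  defines "F \<equiv> realization_map \<psi>"
  shows "(\<forall>W\<in>tits_building. \<psi> W \<in> lattice_poset OK \<pi>) \<and>
         (\<forall>W1\<in>tits_building. \<forall>W2\<in>tits_building. W1 \<subseteq> W2 \<longrightarrow> \<psi> W1 \<subseteq> \<psi> W2) \<and>
         continuous_map (order_complex tits_building (\<subseteq>))
                        (order_complex (lattice_poset OK \<pi>) (\<subseteq>)) F \<and>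
         (\<exists>G. continuous_map (order_complex (lattice_poset OK \<pi>) (\<subseteq>))
                             (order_complex tits_building (\<subseteq>)) G \<and>
              homotopic_with (\<lambda>x. True) (order_complex tits_building (\<subseteq>))
                 (order_complex tits_building (\<subseteq>)) (G \<circ> F) id \<and>
              homotopic_with (\<lambda>x. True) (order_complex (lattice_poset OK \<pi>) (\<subseteq>))
                 (order_complex (lattice_poset OK \<pi>) (\<subseteq>)) (F \<circ> G) id)"
proof -
  have nv: "normalized_discrete_valuation v" using assms(1) by (simp add: p_adic_local_field_def)
  let ?T = "tits_building :: ('n \<Rightarrow> 'k) set set"
  let ?Lp = "lattice_poset OK \<pi> :: ('n \<Rightarrow> 'k) set set"
  have psi_eq: "\<And>W. \<psi> W = W \<inter> std_lattice (valuation_ring v)" by (simp add: assms(4,5))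
  have c1: "\<forall>W\<in>?T. \<psi> W \<in> ?Lp"
    unfolding psi_eq assms(4) using psi_in[OF nv assms(3) assms(2)] by blast
  have c2: "\<forall>W1\<in>?T. \<forall>W2\<in>?T. W1 \<subseteq> W2 \<longrightarrow> \<psi> W1 \<subseteq> \<psi> W2" unfolding psi_eq by blast
  have c3: "continuous_map (order_complex ?T (\<subseteq>)) (order_complex ?Lp (\<subseteq>)) F"
    unfolding assms(6) by (rule rm_continuous) (use c1 c2 in auto)
  define G where "G = realization_map (spanK :: ('n \<Rightarrow> 'k) set \<Rightarrow> _)"
  have sT: "\<And>U. U \<in> ?Lp \<Longrightarrow> spanK U \<in> ?T"
    unfolding assms(4) by (rule spanK_in[OF nv])
  have sm: "\<And>U1 U2. U1 \<subseteq> U2 \<Longrightarrow> spanK U1 \<subseteq> (spanK U2 :: ('n \<Rightarrow> 'k) set)"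
    unfolding spanK_def by blast
  have cG: "continuous_map (order_complex ?Lp (\<subseteq>)) (order_complex ?T (\<subseteq>)) G"
    unfolding G_def by (rule rm_continuous) (use sT sm in auto)
  have GF: "homotopic_with (\<lambda>x. True) (order_complex ?T (\<subseteq>)) (order_complex ?T (\<subseteq>)) (G \<circ> F) id"
  proof (rule homotopic_with_equal)
    show "continuous_map (order_complex ?T (\<subseteq>)) (order_complex ?T (\<subseteq>)) (G \<circ> F)"
      by (rule continuous_map_compose[OF c3 cG])
    fix x assume "x \<in> topspace (order_complex ?T (\<subseteq>))"
    then have x: "x \<in> realization_carrier ?T (\<subseteq>)" by (simp add: topspace_oc)
    have "(G \<circ> F) x = realization_map (spanK \<circ> \<psi>) x"
      unfolding G_def assms(6) o_def[of "realization_map spanK"] by (rule rm_comp[OF x])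
    also have "\<dots> = realization_map (\<lambda>a. a) x"
    proof (rule rm_cong)
      fix a assume "a \<in> osupp x"
      then have "a \<in> ?T" using rc_facts(2)[OF x] by blast
      then have "is_K_subspace a" by (simp add: tits_building_def)
      then show "(spanK \<circ> \<psi>) a = a" unfolding o_def psi_eq by (rule spanK_psi[OF nv])
    qed
    also have "\<dots> = x" by (rule rm_id[OF x])
    finally show "(G \<circ> F) x = id x" by simp
  qed simp_all
  have gP: "\<And>U. U \<in> ?Lp \<Longrightarrow> (\<psi> \<circ> spanK) U \<in> ?Lp" using c1 sT by simp
  have gm: "\<And>a b. a \<in> ?Lp \<Longrightarrow> b \<in> ?Lp \<Longrightarrow> a \<subseteq> b \<Longrightarrow> (\<psi> \<circ> spanK) a \<subseteq> (\<psi> \<circ> spanK) b"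
    unfolding psi_eq o_def using sm by blast
  have fg: "\<And>a. a \<in> ?Lp \<Longrightarrow> a \<subseteq> (\<psi> \<circ> spanK) a"
  proof -
    fix a assume "a \<in> ?Lp"
    then have "a \<subseteq> std_lattice (valuation_ring v)" by (simp add: lattice_poset_def assms(4))
    then show "a \<subseteq> (\<psi> \<circ> spanK) a" unfolding o_def psi_eq by (rule sub_psi_spanK[OF nv])
  qed
  have H1: "homotopic_with (\<lambda>h. True) (order_complex ?Lp (\<subseteq>)) (order_complex ?Lp (\<subseteq>))
           (realization_map (\<lambda>a. a)) (realization_map (\<psi> \<circ> spanK))"
    by (rule rm_homotopic[OF _ gP _ gm fg]) auto
  have contid: "continuous_map (order_complex ?Lp (\<subseteq>)) (order_complex ?Lp (\<subseteq>)) (realization_map (\<lambda>a. a))"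
    using homotopic_with_imp_continuous_maps[OF H1] by blast
  have FG1: "homotopic_with (\<lambda>x. True) (order_complex ?Lp (\<subseteq>)) (order_complex ?Lp (\<subseteq>))
           (F \<circ> G) (realization_map (\<psi> \<circ> spanK))"
  proof (rule homotopic_with_equal)
    show "continuous_map (order_complex ?Lp (\<subseteq>)) (order_complex ?Lp (\<subseteq>)) (F \<circ> G)"
      by (rule continuous_map_compose[OF cG c3])
    fix x assume "x \<in> topspace (order_complex ?Lp (\<subseteq>))"
    then have x: "x \<in> realization_carrier ?Lp (\<subseteq>)" by (simp add: topspace_oc)
    show "(F \<circ> G) x = realization_map (\<psi> \<circ> spanK) x"
      unfolding G_def assms(6) o_def[of "realization_map \<psi>"] by (rule rm_comp[OF x])
  qed simp_all
  have FG3: "homotopic_with (\<lambda>x. True) (order_complex ?Lp (\<subseteq>)) (order_complex ?Lp (\<subseteq>))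
           (realization_map (\<lambda>a. a)) id"
  proof (rule homotopic_with_equal)
    show "continuous_map (order_complex ?Lp (\<subseteq>)) (order_complex ?Lp (\<subseteq>)) (realization_map (\<lambda>a. a))"
      by (rule contid)
    fix x assume "x \<in> topspace (order_complex ?Lp (\<subseteq>))"
    then have x: "x \<in> realization_carrier ?Lp (\<subseteq>)" by (simp add: topspace_oc)
    show "realization_map (\<lambda>a. a) x = id x" using rm_id[OF x] by simp
  qed simp_all
  have FG: "homotopic_with (\<lambda>x. True) (order_complex ?Lp (\<subseteq>)) (order_complex ?Lp (\<subseteq>)) (F \<circ> G) id"
    using homotopic_with_trans[OF FG1 homotopic_with_trans[OF homotopic_with_symD[OF H1] FG3]] .
  show ?thesis using c1 c2 c3 cG GF FG by blast
qed

end
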